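(* Let $T=[0,T_0]$ for some $T_0>0$ or $T=[0,\infty)$, and let $(u,\beta)$ and $(v,\gamma)$ be solutions to mass-conserving double-obstacle AC flow on $T$ with $u(0)=v(0)$. Then $u(t)=v(t)$ for all $t\in T$, and there exists $\tilde T\subseteq T$ with $T\setminus\tilde T$ of Lebesgue measure zero such that for all $t\in\tilde T$, $\beta(t)-\gamma(t)=(\overline{\beta(t)}-\overline{\gamma(t)})\mathbf 1$. Furthermore, if $u_i(t)\in(0,1)$ for some $i\in V$ and $t\in\tilde T$, then $\beta(t)=\gamma(t)$.
   Context: $G=(V,E)$ is a finite, simple, connected, undirected graph with weights $\omega_{ij}=\omega_{ji}>0$ for $ij\in E$, $\omega_{ij}=0$ otherwise; $d_i=\sum_j\omega_{ij}$, $r\in[0,1]$ fixed. $\mathcal V$ = functions $V\to\mathbb R$ with $\langle u,v\rangle_{\mathcal V}=\sum_i u_iv_id_i^r$; $\mathcal V_X$ = functions $V\to X$. $(\Delta u)_i=d_i^{-r}\sum_j\omega_{ij}(u_i-u_j)$. $\mathbf 1$ all-ones; $\mathcal M(u)=\langle u,\mathbf 1\rangle_{\mathcal V}$; $\bar v=\mathcal M(v)/\mathcal M(\mathbf 1)$. $\varepsilon>0$. For $u\in\mathcal V_{[0,1]}$, $\mathcal B(u)$ = set of $\beta\in\mathcal V$ with $\beta_i\ge0$ if $u_i=0$, $\beta_i=0$ if $0<u_i<1$, $\beta_i\le0$ if $u_i=1$; $\mathcal B(u)=\emptyset$ otherwise. $H^1_{loc}(T;\mathcal V)$: functions $T\to\mathcal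 V$ whose components lie in $H^1((a,b))$ for all $a,b\in T$, with weak derivative $du/dt$. A pair $(u,\beta)$ with $u:T\to\mathcal V_{[0,1]}$, $\beta:T\to\mathcal V$ is a solution to mass-conserving double-obstacle AC flow on $T$ if $u\in H^1_{loc}(T;\mathcal V)\cap C^0(T;\mathcal V)$ and for a.e. $t\in T$: $\varepsilon \frac{du}{dt} + \varepsilon\Delta u(t)-u(t)+\overline{u(t)}\mathbf{1} = \beta(t) - \overline{\beta(t)}\mathbf{1}$ and $\beta(t)\in\mathcal B(u(t))$. *)

theory Defs
  imports "HOL-Analysis.Analysis"
begin

definition weighted_graph :: "('v::finite \<Rightarrow> 'v \<Rightarrow> real) \<Rightarrow> bool" where
  "weighted_graph w \<longleftrightarrow>
     (\<forall>i j. w i j = w j i) \<and> (\<forall>i j. 0 \<le> w i j) \<and> (\<forall>i. w i i = 0) \<and>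
     (\<forall>i j. (i, j) \<in> {(x, y). 0 < w x y}\<^sup>*)"

definition deg :: "('v::finite \<Rightarrow> 'v \<Rightarrow> real) \<Rightarrow> 'v \<Rightarrow> real" where
  "deg w i = (\<Sum>j\<in>UNIV. w i j)"

definition inner_V :: "('v::finite \<Rightarrow> 'v \<Rightarrow> real) \<Rightarrow> real \<Rightarrow> ('v \<Rightarrow> real) \<Rightarrow> ('v \<Rightarrow> real) \<Rightarrow> real" where
  "inner_V w r u v = (\<Sum>i\<in>UNIV. u i * v i * deg w i powr r)"

definition graph_laplacian :: "('v::finite \<Rightarrow> 'v \<Rightarrow> real) \<Rightarrow> real \<Rightarrow> ('v \<Rightarrow> real) \<Rightarrow> 'v \<Rightarrow> real" where
  "graph_laplacian w r u i = deg w i powr (- r) * (\<Sum>j\<in>UNIV. w i j * (u i - u j))"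

definition mass :: "('v::finite \<Rightarrow> 'v \<Rightarrow> real) \<Rightarrow> real \<Rightarrow> ('v \<Rightarrow> real) \<Rightarrow> real" where
  "mass w r u = inner_V w r u (\<lambda>_. 1)"

definition mean :: "('v::finite \<Rightarrow> 'v \<Rightarrow> real) \<Rightarrow> real \<Rightarrow> ('v \<Rightarrow> real) \<Rightarrow> real" where
  "mean w r v = mass w r v / mass w r (\<lambda>_. 1)"

definition obstacle_set :: "('v \<Rightarrow> real) \<Rightarrow> ('v \<Rightarrow> real) set" where
  "obstacle_set u = (if (\<forall>i. u i \<in> {0..1})
     then {\<beta>. \<forall>i. (u i = 0 \<longrightarrow> 0 \<le> \<beta> i) \<and> (0 < u i \<and> u i < 1 \<longrightarrow> \<beta> i = 0)
                   \<and> (u i = 1 \<longrightarrow> \<beta> i \<le> 0)}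
     else {})"

definition test_fun :: "real \<Rightarrow> real \<Rightarrow> (real \<Rightarrow> real) \<Rightarrow> bool" where
  "test_fun a b \<phi> \<longleftrightarrow> (\<forall>k x. ((deriv ^^ k) \<phi>) differentiable (at x)) \<and>
     compact (closure {x. \<phi> x \<noteq> 0}) \<and> closure {x. \<phi> x \<noteq> 0} \<subseteq> {a<..<b}"

definition L2_on :: "real \<Rightarrow> real \<Rightarrow> (real \<Rightarrow> real) \<Rightarrow> bool" where
  "L2_on a b f \<longleftrightarrow> set_borel_measurable lebesgue {a<..<b} f \<and>
     set_integrable lebesgue {a<..<b} (\<lambda>x. (f x)\<^sup>2)"

definition H1_weak_deriv :: "real \<Rightarrow> real \<Rightarrow> (real \<Rightarrow> real) \<Rightarrow> (real \<Rightarrow> real) \<Rightarrow> bool" where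
  "H1_weak_deriv a b f g \<longleftrightarrow> L2_on a b f \<and> L2_on a b g \<and>
     (\<forall>\<phi>. test_fun a b \<phi> \<longrightarrow>
        (LINT x:{a<..<b}|lebesgue. f x * deriv \<phi> x) = - (LINT x:{a<..<b}|lebesgue. g x * \<phi> x))"

definition H1_loc_deriv :: "real set \<Rightarrow> (real \<Rightarrow> 'v \<Rightarrow> real) \<Rightarrow> (real \<Rightarrow> 'v \<Rightarrow> real) \<Rightarrow> bool" where
  "H1_loc_deriv T u du \<longleftrightarrow>
     (\<forall>a\<in>T. \<forall>b\<in>T. \<forall>i. H1_weak_deriv a b (\<lambda>t. u t i) (\<lambda>t. du t i))"

definition mc_double_obstacle_AC_solution ::
  "('v::finite \<Rightarrow> 'v \<Rightarrow> real) \<Rightarrow> real \<Rightarrow> real \<Rightarrow> real set \<Rightarrow>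
   (real \<Rightarrow> 'v \<Rightarrow> real) \<Rightarrow> (real \<Rightarrow> 'v \<Rightarrow> real) \<Rightarrow> bool" where
  "mc_double_obstacle_AC_solution w r \<epsilon> T u \<beta> \<longleftrightarrow>
     (\<forall>t\<in>T. \<forall>i. u t i \<in> {0..1}) \<and>
     (\<forall>i. continuous_on T (\<lambda>t. u t i)) \<and>
     (\<exists>du. H1_loc_deriv T u du \<and>
        (AE t in lebesgue. t \<in> T \<longrightarrow>
           (\<forall>i. \<epsilon> * du t i + \<epsilon> * graph_laplacian w r (u t) i - u t i + mean w r (u t)
                 = \<beta> t i - mean w r (\<beta> t)) \<and>
           \<beta> t \<in> obstacle_set (u t)))"

end

theory Submission
  imports Defs "HOL-Computational_Algebra.Polynomial" "HOL-Analysis.Analysis"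
begin

fun sm :: "nat \<Rightarrow> (real \<Rightarrow> real) \<Rightarrow> bool" where
  "sm 0 f = True"
| "sm (Suc n) f = (\<exists>f'. (\<forall>x. (f has_real_derivative f' x) (at x)) \<and> sm n f')"

lemma sm_Suc_imp: "sm (Suc n) f \<Longrightarrow> sm n f"
proof (induction n arbitrary: f)
  case 0 then show ?case by simp
next
  case (Suc n)
  then obtain f' where "\<forall>x. (f has_real_derivative f' x) (at x)" "sm (Suc n) f'" by auto
  with Suc.IH show ?case by auto
qed


lemma sm_add: "sm n f \<Longrightarrow> sm n g \<Longrightarrow> sm n (\<lambda>x. f x + g x)"
proof (induction n arbitrary: f g)
  case 0 then show ?case by simp
next
  case (Suc n)
  then obtain f' g' where "\<forall>x. (f has_real_derivative f' x) (at x)" "sm n f'"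
     "\<forall>x. (g has_real_derivative g' x) (at x)" "sm n g'" by auto
  with Suc.IH[of f' g'] show ?case by (auto intro!: exI[of _ "\<lambda>x. f' x + g' x"] DERIV_add)
qed

lemma sm_cmult: "sm n f \<Longrightarrow> sm n (\<lambda>x. c * f x)"
proof (induction n arbitrary: f)
  case 0 then show ?case by simp
next
  case (Suc n)
  then obtain f' where "\<forall>x. (f has_real_derivative f' x) (at x)" "sm n f'" by auto
  with Suc.IH[of f'] show ?case by (auto intro!: exI[of _ "\<lambda>x. c * f' x"] DERIV_cmult)
qed

lemma sm_diff: "sm n f \<Longrightarrow> sm n g \<Longrightarrow> sm n (\<lambda>x. f x - g x)"
  using sm_add[of n f "\<lambda>x. (-1) * g x"] sm_cmult[of n g "-1"] by simp

lemma sm_mult: "sm n f \<Longrightarrow> sm n g \<Longrightarrow> sm n (\<lambda>x. f x * g x)"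
proof (induction n arbitrary: f g)
  case 0 then show ?case by simp
next
  case (Suc n)
  then obtain f' g' where f': "\<forall>x. (f has_real_derivative f' x) (at x)" "sm n f'"
     and g': "\<forall>x. (g has_real_derivative g' x) (at x)" "sm n g'" by auto
  have "sm n f" "sm n g" using Suc.prems sm_Suc_imp by auto
  then have "sm n (\<lambda>x. f' x * g x + f x * g' x)"
    using Suc.IH f' g' by (intro sm_add) auto
  moreover have "\<forall>x. ((\<lambda>x. f x * g x) has_real_derivative (f' x * g x + f x * g' x)) (at x)"
    using f' g' by (auto intro!: derivative_eq_intros)
  ultimately show ?case by auto
qed

lemma sm_affine: "sm n f \<Longrightarrow> sm n (\<lambda>x. f (c * x + d))"
proof (induction n arbitrary: f)
  case 0 then show ?case by simp
next
  case (Suc n)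
  then obtain f' where f': "\<forall>x. (f has_real_derivative f' x) (at x)" "sm n f'" by auto
  have "sm n (\<lambda>x. c * f' (c * x + d))" using Suc.IH f' by (intro sm_cmult) auto
  moreover have "\<forall>x. ((\<lambda>x. f (c * x + d)) has_real_derivative (c * f' (c * x + d))) (at x)"
  proof
    fix x
    have "((\<lambda>x. c * x + d) has_real_derivative c) (at x)" by (auto intro!: derivative_eq_intros)
    from DERIV_chain2[OF f'(1)[rule_format] this] show "((\<lambda>x. f (c * x + d)) has_real_derivative (c * f' (c * x + d))) (at x)"
      by (simp add: mult.commute)
  qed
  ultimately show ?case by auto
qed

lemma sm_deriv: "sm (Suc n) f \<Longrightarrow> sm n (deriv f)"
proof -
  assume "sm (Suc n) f"
  then obtain f' where f': "\<forall>x. (f has_real_derivative f' x) (at x)" "sm n f'" by auto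
  have "deriv f = f'" using f'(1) DERIV_imp_deriv by blast
  with f' show ?thesis by simp
qed

lemma sm_funpow: "sm (n + k) f \<Longrightarrow> sm n ((deriv ^^ k) f)"
proof (induction k arbitrary: n)
  case 0 then show ?case by simp
next
  case (Suc k)
  have "sm (Suc n) ((deriv ^^ k) f)" using Suc.IH[of "Suc n"] Suc.prems by simp
  then show ?case by (simp add: sm_deriv)
qed

definition smooth :: "(real \<Rightarrow> real) \<Rightarrow> bool" where "smooth f \<longleftrightarrow> (\<forall>n. sm n f)"

lemma smooth_deriv_differentiable:
  assumes "smooth f" shows "((deriv ^^ k) f) differentiable (at x)"
proof -
  have "sm (1 + k) f" using assms smooth_def by blast
  then have "sm 1 ((deriv ^^ k) f)" by (rule sm_funpow)
  then show ?thesis by (auto simp: real_differentiable_def)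
qed

definition Fp :: "real poly \<Rightarrow> real \<Rightarrow> real" where
  "Fp p x = (if 0 < x then poly p (1/x) * exp (-1/x) else 0)"

definition dp :: "real poly \<Rightarrow> real poly" where
  "dp p = [:0,0,1:] * (p - pderiv p)"

lemma poly_exp_lim: fixes p :: "real poly" shows "((\<lambda>y. poly p y * y * exp (-y)) \<longlongrightarrow> 0) at_top"
proof -
  have eq: "poly p y * y * exp (-y) = (\<Sum>i\<le>degree p. coeff p i * (y ^ Suc i / exp y))" for y
    by (simp add: poly_altdef sum_distrib_left sum_distrib_right sum_divide_distrib exp_minus divide_inverse mult_ac)
  have "((\<lambda>y. \<Sum>i\<le>degree p. coeff p i * (y ^ Suc i / exp y)) \<longlongrightarrow> (\<Sum>i\<le>degree p. coeff p i * 0)) at_top"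
    by (intro tendsto_intros tendsto_power_div_exp_0)
  then show ?thesis by (simp add: eq)
qed

lemma Fp_deriv0: "(Fp p has_real_derivative 0) (at 0)"
proof -
  have "((\<lambda>h. (Fp p (0 + h) - Fp p 0) / h) \<longlongrightarrow> 0) (at_left 0)"
  proof (rule tendsto_eventually)
    show "\<forall>\<^sub>F h in at_left 0. (Fp p (0 + h) - Fp p 0) / h = 0"
      using eventually_at_left_real[of "-1" "0::real"] by (rule eventually_mono) (auto simp: Fp_def)
  qed
  moreover have "((\<lambda>h. (Fp p (0 + h) - Fp p 0) / h) \<longlongrightarrow> 0) (at_right 0)"
  proof -
    have "((\<lambda>y. poly p y * y * exp (-y)) \<longlongrightarrow> 0) at_top" by (rule poly_exp_lim)
    then have "((\<lambda>x. poly p (inverse x) * inverse x * exp (- inverse x)) \<longlongrightarrow> 0) (at_right 0)"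
      unfolding filterlim_at_top_to_right .
    then show ?thesis
    proof (rule Lim_transform_eventually)
      show "\<forall>\<^sub>F x in at_right 0. poly p (inverse x) * inverse x * exp (- inverse x) = (Fp p (0 + x) - Fp p 0) / x"
        using eventually_at_right_real[of "0::real" 1] by (rule eventually_mono) (auto simp: Fp_def field_simps)
    qed
  qed
  ultimately have "((\<lambda>h. (Fp p (0 + h) - Fp p 0) / h) \<longlongrightarrow> 0) (at 0)"
    by (simp add: filterlim_at_split)
  then show ?thesis by (simp add: DERIV_def)
qed

lemma Fp_deriv: "(Fp p has_real_derivative Fp (dp p) x) (at x)"
proof (cases "x = 0")
  case True then show ?thesis using Fp_deriv0 by (simp add: Fp_def)
next
  case False
  show ?thesis
  proof (cases "x > 0")
    case True
    have d: "((\<lambda>x. poly p (1/x) * exp (-1/x)) has_real_derivative Fp (dp p) x) (at x)"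
    proof -
      have "((\<lambda>x. poly p (1/x) * exp (-1/x)) has_real_derivative
         (poly (pderiv p) (1/x) * (- 1 / x\<^sup>2) * exp (-1/x) + poly p (1/x) * (exp (-1/x) * (1 / x\<^sup>2)))) (at x)"
        using True
        by (auto intro!: derivative_eq_intros DERIV_chain2[OF poly_DERIV] simp: power2_eq_square field_simps)
      moreover have "poly (pderiv p) (1/x) * (- 1 / x\<^sup>2) * exp (-1/x) + poly p (1/x) * (exp (-1/x) * (1 / x\<^sup>2))
          = Fp (dp p) x"
        using True by (simp add: Fp_def dp_def field_simps power2_eq_square)
      ultimately show ?thesis by simp
    qed
    show ?thesis
    proof (rule has_field_derivative_transform_within_open[OF d, of "{0<..}"])
      show "\<And>z. z \<in> {0<..} \<Longrightarrow> poly p (1 / z) * exp (- 1 / z) = Fp p z" by (simp add: Fp_def)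
    qed (use True in auto)
  next
    case False2: False
    have x: "x < 0" using False False2 by simp
    have d: "((\<lambda>x. 0) has_real_derivative Fp (dp p) x) (at x)"
      using x by (simp add: Fp_def)
    show ?thesis
    proof (rule has_field_derivative_transform_within_open[OF d, of "{..<0}"])
      show "\<And>z. z \<in> {..<0} \<Longrightarrow> 0 = Fp p z" by (simp add: Fp_def)
    qed (use x in auto)
  qed
qed

lemma sm_Fp: "sm n (Fp p)"
proof (induction n arbitrary: p)
  case 0 then show ?case by simp
next
  case (Suc n)
  show ?case using Fp_deriv Suc.IH by auto
qed

definition bump :: "real \<Rightarrow> real" where "bump y = Fp 1 (1 + y) * Fp 1 (1 - y)"

lemma sm_bump: "sm n bump"
proof -
  have "sm n (\<lambda>y. Fp 1 (1 * y + 1) * Fp 1 ((-1) * y + 1))"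
    by (intro sm_mult sm_affine sm_Fp)
  then show ?thesis unfolding bump_def by (simp add: add.commute)
qed

lemma bump_deriv: "\<exists>D. \<forall>x. (bump has_real_derivative D x) (at x)"
  using sm_bump[of 1] by auto

lemma bump_cont: "continuous_on S bump"
proof -
  obtain D where "\<forall>x. (bump has_real_derivative D x) (at x)" using bump_deriv by blast
  then have "\<forall>x. isCont bump x" using DERIV_isCont by blast
  then show ?thesis by (simp add: continuous_at_imp_continuous_on)
qed

lemma bump_nonneg: "0 \<le> bump y"
  by (simp add: bump_def Fp_def)

lemma bump_zero: "y \<le> -1 \<or> 1 \<le> y \<Longrightarrow> bump y = 0"
  by (auto simp: bump_def Fp_def)

lemma bump_pos0: "0 < bump 0"
  by (simp add: bump_def Fp_def)

definition Cb :: real where "Cb = integral {-2..1} bump"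

lemma Cb_pos: "0 < Cb"
proof -
  have "0 \<le> Cb" unfolding Cb_def
    by (intro integral_nonneg integrable_continuous_interval bump_cont bump_nonneg)
  moreover have "Cb \<noteq> 0"
  proof
    assume "Cb = 0"
    then have "\<forall>x\<in>{-2..1}. bump x = 0"
      using integral_eq_0_iff[of "-2" 1 bump] bump_cont bump_nonneg by (simp add: Cb_def)
    then show False using bump_pos0 by auto
  qed
  ultimately show ?thesis by simp
qed

definition R :: "real \<Rightarrow> real" where "R y = integral {-2..y} bump / Cb"

definition rr :: "real \<Rightarrow> real" where "rr y = bump y / Cb"

lemma R_low: "y \<le> -1 \<Longrightarrow> R y = 0"
proof -
  assume y: "y \<le> -1"
  have "(bump has_integral 0) {-2..y}"
    by (rule has_integral_is_0) (use y bump_zero in auto)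
  then show ?thesis by (simp add: R_def integral_unique)
qed

lemma R_high: "1 \<le> y \<Longrightarrow> R y = 1"
proof -
  assume y: "1 \<le> y"
  have "integral {-2..y} bump = integral {-2..1} bump + integral {1..y} bump"
    using Henstock_Kurzweil_Integration.integral_combine[where a="-2" and c=1 and b=y and f=bump] y integrable_continuous_interval[OF bump_cont] by simp
  moreover have "(bump has_integral 0) {1..y}"
    by (rule has_integral_is_0) (use y bump_zero in auto)
  ultimately have "integral {-2..y} bump = Cb" by (simp add: Cb_def integral_unique)
  then show ?thesis using Cb_pos by (simp add: R_def)
qed

lemma R_nonneg: "0 \<le> R y"
  unfolding R_def using Cb_pos
  by (intro divide_nonneg_pos integral_nonneg integrable_continuous_interval bump_cont bump_nonneg) auto

lemma R_le1: "R y \<le> 1"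
proof (cases "y \<le> 1")
  case True
  have "integral {-2..y} bump \<le> integral {-2..1} bump"
    by (rule integral_subset_le) (use True in \<open>auto intro: integrable_continuous_interval bump_cont bump_nonneg\<close>)
  then show ?thesis using Cb_pos by (simp add: R_def Cb_def)
next
  case False then show ?thesis using R_high by simp
qed

lemma R_deriv: "(R has_real_derivative rr y) (at y)"
proof (cases "y < -1")
  case True
  have d: "((\<lambda>x. 0) has_real_derivative rr y) (at y)"
    using True bump_zero[of y] by (simp add: rr_def)
  show ?thesis
    by (rule has_field_derivative_transform_within_open[OF d, of "{..<-1}"]) (use True R_low in auto)
next
  case False
  have "((\<lambda>x. integral {-2..x} bump) has_real_derivative bump y) (at y within {-2..y+1})"
    by (rule integral_has_real_derivative) (use False in \<open>auto intro: bump_cont\<close>)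
  moreover have "at y within {-2..y+1} = at y"
    by (rule at_within_interior) (use False in auto)
  ultimately have "((\<lambda>x. integral {-2..x} bump) has_real_derivative bump y) (at y)" by simp
  from DERIV_cdivide[OF this, of Cb] show ?thesis by (simp add: R_def[abs_def] rr_def)
qed

lemma sm_R: "sm n R"
proof (cases n)
  case 0 then show ?thesis by simp
next
  case (Suc m)
  have "sm m (\<lambda>y. (1/Cb) * bump y)" by (intro sm_cmult sm_bump)
  then have "sm m rr" by (simp add: rr_def[abs_def])
  then show ?thesis using Suc R_deriv by auto
qed

lemma rr_nonneg: "0 \<le> rr y" using Cb_pos bump_nonneg by (simp add: rr_def)
lemma rr_zero: "y \<le> -1 \<or> 1 \<le> y \<Longrightarrow> rr y = 0" by (simp add: rr_def bump_zero)
lemma rr_cont: "continuous_on S rr"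
  unfolding rr_def[abs_def] using Cb_pos by (intro continuous_intros bump_cont) auto

lemma cont_meas_leb: "continuous_on UNIV f \<Longrightarrow> (f::real\<Rightarrow>real) \<in> borel_measurable lebesgue"
  by (intro measurable_completion) (simp add: borel_measurable_continuous_onI)

lemma rr_comp [continuous_intros]: "continuous_on S g \<Longrightarrow> continuous_on S (\<lambda>x. rr (g x))"
  by (rule continuous_on_compose2[OF rr_cont[of UNIV]]) auto

lemma R_cont: "continuous_on S R"
  using R_deriv DERIV_isCont continuous_at_imp_continuous_on by blast

lemma R_comp [continuous_intros]: "continuous_on S g \<Longrightarrow> continuous_on S (\<lambda>x. R (g x))"
  by (rule continuous_on_compose2[OF R_cont[of UNIV]]) auto

definition phi :: "real \<Rightarrow> real \<Rightarrow> real \<Rightarrow> real \<Rightarrow> real" where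
  "phi s t d x = R ((x - s) / d) - R ((x - t) / d)"

definition dphi :: "real \<Rightarrow> real \<Rightarrow> real \<Rightarrow> real \<Rightarrow> real" where
  "dphi s t d x = rr ((x - s) / d) / d - rr ((x - t) / d) / d"

lemma R_comp_deriv: "((\<lambda>x. R ((x - c) / d)) has_real_derivative rr ((x - c) / d) / d) (at x)"
proof (cases "d = 0")
  case True then show ?thesis by simp
next
  case False
  have "((\<lambda>x. (x - c) / d) has_real_derivative 1 / d) (at x)"
    using False by (auto intro!: derivative_eq_intros)
  from DERIV_chain2[OF R_deriv this] show ?thesis by simp
qed

lemma phi_deriv: "(phi s t d has_real_derivative dphi s t d x) (at x)"
  unfolding phi_def[abs_def] dphi_def
  by (intro DERIV_diff R_comp_deriv)

lemma deriv_phi: "deriv (phi s t d) = dphi s t d"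
  using phi_deriv DERIV_imp_deriv by blast

lemma phi_zero: "0 < d \<Longrightarrow> s \<le> t \<Longrightarrow> x \<le> s - d \<or> t + d \<le> x \<Longrightarrow> phi s t d x = 0"
proof -
  assume d: "0 < d" and st: "s \<le> t" and x: "x \<le> s - d \<or> t + d \<le> x"
  show ?thesis
  proof (cases "x \<le> s - d")
    case True
    then have "(x - s) / d \<le> -1" "(x - t) / d \<le> -1" using d st by (auto simp: field_simps)
    then show ?thesis by (simp add: phi_def R_low)
  next
    case False
    then have "t + d \<le> x" using x by auto
    then have "1 \<le> (x - s) / d" "1 \<le> (x - t) / d" using d st by (auto simp: field_simps)
    then show ?thesis by (simp add: phi_def R_high)
  qed
qed

lemma dphi_zero: "0 < d \<Longrightarrow> s \<le> t \<Longrightarrow> x \<le> s - d \<or> t + d \<le> x \<Longrightarrow> dphi s t d x = 0"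
proof -
  assume d: "0 < d" and st: "s \<le> t" and x: "x \<le> s - d \<or> t + d \<le> x"
  show ?thesis
  proof (cases "x \<le> s - d")
    case True
    then have "(x - s) / d \<le> -1" "(x - t) / d \<le> -1" using d st by (auto simp: field_simps)
    then show ?thesis by (simp add: dphi_def rr_zero)
  next
    case False
    then have "t + d \<le> x" using x by auto
    then have "1 \<le> (x - s) / d" "1 \<le> (x - t) / d" using d st by (auto simp: field_simps)
    then show ?thesis by (simp add: dphi_def rr_zero)
  qed
qed

lemma phi_bound: "\<bar>phi s t d x\<bar> \<le> 1"
  using R_nonneg[of "(x - s) / d"] R_le1[of "(x - s) / d"] R_nonneg[of "(x - t) / d"] R_le1[of "(x - t) / d"]
  by (simp add: phi_def abs_le_iff)

lemma lin_cont: "continuous_on S (\<lambda>x::real. (x - c) / d)"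
  by (cases "d = 0") (auto intro!: continuous_intros)

lemma phi_cont: "continuous_on S (phi s t d)"
  unfolding phi_def[abs_def] by (intro continuous_intros lin_cont)

lemma dphi_cont: "continuous_on S (dphi s t d)"
proof (cases "d = 0")
  case True then show ?thesis by (simp add: dphi_def[abs_def])
next
  case False then show ?thesis
  unfolding dphi_def[abs_def] by (intro continuous_on_diff continuous_on_divide rr_comp lin_cont continuous_on_const) auto
qed

lemma phi_test:
  assumes d: "0 < d" and st: "s \<le> t" and ab: "a < s - d" "t + d < b"
  shows "test_fun a b (phi s t d)"
proof -
  have eq: "phi s t d = (\<lambda>x. R ((1/d) * x + (- s / d)) - R ((1/d) * x + (- t / d)))"
    by (auto simp: phi_def diff_divide_distrib)
  have "sm n (phi s t d)" for n
    unfolding eq by (intro sm_diff sm_affine sm_R)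
  then have sm: "smooth (phi s t d)" by (simp add: smooth_def)
  have sub: "{x. phi s t d x \<noteq> 0} \<subseteq> {s - d .. t + d}"
  proof
    fix x assume "x \<in> {x. phi s t d x \<noteq> 0}"
    then have "\<not> (x \<le> s - d \<or> t + d \<le> x)" using phi_zero[OF d st, of x] by auto
    then show "x \<in> {s - d .. t + d}" by auto
  qed
  then have cl: "closure {x. phi s t d x \<noteq> 0} \<subseteq> {s - d .. t + d}"
    by (intro closure_minimal) auto
  have "bounded {x. phi s t d x \<noteq> 0}"
    by (rule bounded_subset[OF _ sub]) simp
  then have "compact (closure {x. phi s t d x \<noteq> 0})" by (simp add: compact_closure)
  moreover have "closure {x. phi s t d x \<noteq> 0} \<subseteq> {a<..<b}"
    using cl ab by auto
  ultimately show ?thesis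
    unfolding test_fun_def using smooth_deriv_differentiable[OF sm] by blast
qed

lemma conv_HK:
  fixes h :: "real \<Rightarrow> real"
  assumes h: "continuous_on {p..q} h" and sub: "{p..q} \<subseteq> {a<..<b}"
    and z: "\<And>x. x \<notin> {p..q} \<Longrightarrow> h x = 0"
  shows "(LINT x:{a<..<b}|lebesgue. h x) = integral {p..q} h"
proof -
  have "(LINT x:{a<..<b}|lebesgue. h x) = (LINT x:{p..q}|lebesgue. h x)"
    unfolding set_lebesgue_integral_def
    by (rule Bochner_Integration.integral_cong) (use sub z in \<open>auto simp: indicator_def\<close>)
  also have "\<dots> = integral {p..q} h"
    by (rule set_lebesgue_integral_eq_integral(2)[OF absolutely_integrable_continuous_real[OF h]])
  finally show ?thesis .
qed

lemma moll:
  fixes f :: "real \<Rightarrow> real"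
  assumes f: "continuous_on {p..q} f" and d: "0 < d" and cK: "p \<le> c - d" "c + d \<le> q"
    and e: "\<And>x. x \<in> {p..q} \<Longrightarrow> \<bar>x - c\<bar> \<le> d \<Longrightarrow> \<bar>f x - f c\<bar> \<le> e"
  shows "\<bar>integral {p..q} (\<lambda>x. f x * (rr ((x - c) / d) / d)) - f c\<bar> \<le> e"
proof -
  define \<rho> where "\<rho> x = rr ((x - c) / d) / d" for x
  have \<rho>c: "continuous_on {p..q} \<rho>" unfolding \<rho>_def[abs_def] using d by (intro continuous_on_divide rr_comp lin_cont continuous_on_const) auto
  have \<rho>nn: "0 \<le> \<rho> x" for x using rr_nonneg d by (simp add: \<rho>_def)
  have \<rho>z: "\<rho> x = 0" if "\<bar>x - c\<bar> > d" for x
  proof -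
    have "(x - c) / d \<le> -1 \<or> 1 \<le> (x - c) / d" using that d by (auto simp: field_simps abs_if split: if_splits)
    then show ?thesis by (simp add: \<rho>_def rr_zero)
  qed
  have "(\<rho> has_integral (R ((q - c) / d) - R ((p - c) / d))) {p..q}"
    unfolding \<rho>_def
    by (rule fundamental_theorem_of_calculus)
       (use cK d in \<open>auto intro!: has_real_derivative_iff_has_vector_derivative[THEN iffD1, OF DERIV_subset[OF R_comp_deriv]]\<close>)
  moreover have "R ((q - c) / d) = 1" "R ((p - c) / d) = 0"
    using cK d by (auto intro!: R_high R_low simp: field_simps)
  ultimately have int1: "integral {p..q} \<rho> = 1" by (simp add: integral_unique)
  have i1: "(\<lambda>x. f x * \<rho> x) integrable_on {p..q}"
    by (intro integrable_continuous_interval continuous_intros f \<rho>c)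
  have i2: "\<rho> integrable_on {p..q}" by (intro integrable_continuous_interval \<rho>c)
  have "integral {p..q} (\<lambda>x. f x * \<rho> x) - f c = integral {p..q} (\<lambda>x. (f x - f c) * \<rho> x)"
  proof -
    have "integral {p..q} (\<lambda>x. (f x - f c) * \<rho> x) = integral {p..q} (\<lambda>x. f x * \<rho> x - f c * \<rho> x)"
      by (simp add: left_diff_distrib)
    also have "\<dots> = integral {p..q} (\<lambda>x. f x * \<rho> x) - integral {p..q} (\<lambda>x. f c * \<rho> x)"
      by (rule integral_diff[OF i1 integrable_cmul[OF i2, simplified]])
    also have "integral {p..q} (\<lambda>x. f c * \<rho> x) = f c" using int1 by simp
    finally show ?thesis by simp
  qed
  also have "\<bar>\<dots>\<bar> \<le> integral {p..q} (\<lambda>x. e * \<rho> x)"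
  proof -
    have "norm (integral {p..q} (\<lambda>x. (f x - f c) * \<rho> x)) \<le> integral {p..q} (\<lambda>x. e * \<rho> x)"
    proof (rule integral_norm_bound_integral)
      show "(\<lambda>x. (f x - f c) * \<rho> x) integrable_on {p..q}"
        by (intro integrable_continuous_interval continuous_intros f \<rho>c)
      show "(\<lambda>x. e * \<rho> x) integrable_on {p..q}"
        by (intro integrable_continuous_interval continuous_intros \<rho>c)
      fix x assume x: "x \<in> {p..q}"
      show "norm ((f x - f c) * \<rho> x) \<le> e * \<rho> x"
      proof (cases "\<bar>x - c\<bar> \<le> d")
        case True
        then show ?thesis using e[OF x True] \<rho>nn[of x] by (simp add: abs_mult mult_right_mono)
      next
        case False then show ?thesis using \<rho>z[of x] by simp
      qed
    qed
    then show ?thesis by simp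
  qed
  also have "\<dots> = e" using int1 i2 by (simp add: integral_mult_right)
  finally show ?thesis unfolding \<rho>_def .
qed

lemma dom_conv_mult:
  fixes g :: "real \<Rightarrow> real"
  assumes g: "set_integrable lebesgue S g"
    and cm: "\<And>n. c n \<in> borel_measurable lebesgue" and cinf: "ci \<in> borel_measurable lebesgue"
    and bd: "\<And>n x. \<bar>c n x\<bar> \<le> 1"
    and lim: "AE x in lebesgue. (\<lambda>n. c n x) \<longlonglongrightarrow> ci x"
  shows "(\<lambda>n. LINT x:S|lebesgue. g x * c n x) \<longlonglongrightarrow> (LINT x:S|lebesgue. g x * ci x)"
  unfolding set_lebesgue_integral_def
proof (rule integral_dominated_convergence[where w = "\<lambda>x. \<bar>indicator S x *\<^sub>R g x\<bar>"])
  have gm: "(\<lambda>x. indicator S x *\<^sub>R g x) \<in> borel_measurable lebesgue"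
    using g unfolding set_integrable_def by (rule borel_measurable_integrable)
  show "(\<lambda>x. indicat_real S x *\<^sub>R (g x * ci x)) \<in> borel_measurable lebesgue"
    using borel_measurable_times[OF gm cinf] by (simp add: mult.assoc)
  show "(\<lambda>x. indicat_real S x *\<^sub>R (g x * c n x)) \<in> borel_measurable lebesgue" for n
    using borel_measurable_times[OF gm cm[of n]] by (simp add: mult.assoc)
  show "integrable lebesgue (\<lambda>x. \<bar>indicat_real S x *\<^sub>R g x\<bar>)"
    using g unfolding set_integrable_def by (rule integrable_abs)
  show "AE x in lebesgue. (\<lambda>n. indicat_real S x *\<^sub>R (g x * c n x)) \<longlonglongrightarrow> indicat_real S x *\<^sub>R (g x * ci x)"
    using lim by eventually_elim (intro tendsto_scaleR tendsto_const tendsto_mult)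
  show "AE x in lebesgue. norm (indicat_real S x *\<^sub>R (g x * c n x)) \<le> \<bar>indicat_real S x *\<^sub>R g x\<bar>" for n
  proof (rule AE_I2)
    fix x
    have "\<bar>g x * c n x\<bar> \<le> \<bar>g x\<bar>" using bd[of n x] by (simp add: abs_mult mult_left_le)
    then show "norm (indicat_real S x *\<^sub>R (g x * c n x)) \<le> \<bar>indicat_real S x *\<^sub>R g x\<bar>"
      by (auto simp: indicator_def)
  qed
qed

lemma eventually_small: "0 < m \<Longrightarrow> eventually (\<lambda>n. d0 / real (Suc n) < m) sequentially"
proof -
  assume m: "0 < m"
  obtain N :: nat where N: "\<bar>d0\<bar> / m < real N" using reals_Archimedean2 by blast
  show ?thesis
  proof (rule eventually_sequentiallyI[of N])
    fix n assume "N \<le> n"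
    then have "\<bar>d0\<bar> / m < real (Suc n)" using N by linarith
    then have "\<bar>d0\<bar> < m * real (Suc n)" using m by (simp add: field_simps)
    then show "d0 / real (Suc n) < m" by (simp add: field_simps)
  qed
qed

lemma L2_integrable:
  assumes "L2_on a b g" shows "set_integrable lebesgue {a<..<b} g"
proof -
  have m: "set_borel_measurable lebesgue {a<..<b} g" and sq: "set_integrable lebesgue {a<..<b} (\<lambda>x. (g x)\<^sup>2)"
    using assms by (auto simp: L2_on_def)
  have one: "set_integrable lebesgue {a<..<b} (\<lambda>x. 1::real)"
    by (rule absolutely_integrable_on_const) simp
  have "set_integrable lebesgue {a<..<b} (\<lambda>x. 1 + (g x)\<^sup>2)"
    using one sq by (rule set_integral_add)
  then show ?thesis
  proof (rule set_integrable_bound[OF _ m])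
    show "AE x in lebesgue. x \<in> {a<..<b} \<longrightarrow> norm (g x) \<le> norm (1 + (g x)\<^sup>2)"
    proof (rule AE_I2, intro impI)
      fix x
      have "\<bar>g x\<bar> \<le> 1 + (g x)\<^sup>2"
      proof (cases "\<bar>g x\<bar> \<le> 1")
        case True
        have "0 \<le> (g x)\<^sup>2" by simp
        with True show ?thesis by linarith
      next
        case False
        then have "\<bar>g x\<bar> * 1 \<le> \<bar>g x\<bar> * \<bar>g x\<bar>" by (intro mult_left_mono) auto
        also have "\<dots> = (g x)\<^sup>2" by (simp add: power2_eq_square)
        finally show ?thesis by simp
      qed
      then show "norm (g x) \<le> norm (1 + (g x)\<^sup>2)" by simp
    qed
  qed
qed

lemma phi_pointwise:
  assumes st: "s < t" and x: "x \<noteq> s" "x \<noteq> t" and d0: "0 < d0"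
  shows "(\<lambda>n. phi s t (d0 / real (Suc n)) x) \<longlonglongrightarrow> indicator {s<..<t} x"
proof (rule tendsto_eventually)
  define m where "m = min \<bar>x - s\<bar> \<bar>x - t\<bar>"
  have m: "0 < m" using x by (simp add: m_def)
  show "\<forall>\<^sub>F n in sequentially. phi s t (d0 / real (Suc n)) x = indicator {s<..<t} x"
    using eventually_small[OF m, of d0]
  proof (rule eventually_mono)
    fix n assume dn: "d0 / real (Suc n) < m"
    define d where "d = d0 / real (Suc n)"
    have dpos: "0 < d" using d0 by (simp add: d_def)
    have dm: "d < m" using dn by (simp add: d_def)
    show "phi s t (d0 / real (Suc n)) x = indicator {s<..<t} x"
    proof (cases "x < s \<or> t < x")
      case True
      then have "x \<le> s - d \<or> t + d \<le> x" using dm by (auto simp: m_def)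
      then have "phi s t d x = 0" using phi_zero[OF dpos] st by auto
      then show ?thesis using True st by (auto simp: d_def indicator_def)
    next
      case False
      then have xin: "s < x" "x < t" using x by auto
      then have "1 \<le> (x - s) / d" "(x - t) / d \<le> -1" using dm dpos by (auto simp: m_def field_simps)
      then have "phi s t d x = 1" by (simp add: phi_def R_high R_low)
      then show ?thesis using xin by (simp add: d_def indicator_def)
    qed
  qed
qed

lemma weak_FTC:
  fixes f g :: "real \<Rightarrow> real"
  assumes H: "H1_weak_deriv a b f g" and fc: "continuous_on {a..b} f"
    and st: "a < s" "s < t" "t < b"
  shows "f t - f s = (LINT x:{s<..<t}|lebesgue. g x)"
proof -
  define d0 where "d0 = min (s - a) (b - t) / 2"
  have d0: "0 < d0" "a < s - d0" "t + d0 < b" using st by (auto simp: d0_def min_def field_simps)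
  define p where "p = s - d0"
  define q where "q = t + d0"
  define dn where "dn n = d0 / real (Suc n)" for n
  have dn: "0 < dn n" "dn n \<le> d0" for n
    using d0 by (auto simp: dn_def field_simps)
  have gi: "set_integrable lebesgue {a<..<b} g"
    using H by (auto simp: H1_weak_deriv_def intro: L2_integrable)
  have weak: "(LINT x:{a<..<b}|lebesgue. f x * dphi s t (dn n) x) = - (LINT x:{a<..<b}|lebesgue. g x * phi s t (dn n) x)" for n
  proof -
    have "test_fun a b (phi s t (dn n))"
      by (rule phi_test) (use dn[of n] d0 st in auto)
    then show ?thesis using H by (auto simp: H1_weak_deriv_def deriv_phi)
  qed
  have pq: "{p..q} \<subseteq> {a<..<b}" using d0 by (auto simp: p_def q_def)
  have fcK: "continuous_on {p..q} f" using pq by (intro continuous_on_subset[OF fc]) auto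
  define I where "I c n = integral {p..q} (\<lambda>x. f x * (rr ((x - c) / dn n) / dn n))" for c n
  have lhs: "(LINT x:{a<..<b}|lebesgue. f x * dphi s t (dn n) x) = I s n - I t n" for n
  proof -
    have "(LINT x:{a<..<b}|lebesgue. f x * dphi s t (dn n) x) = integral {p..q} (\<lambda>x. f x * dphi s t (dn n) x)"
    proof (rule conv_HK[OF _ pq])
      show "continuous_on {p..q} (\<lambda>x. f x * dphi s t (dn n) x)"
        by (intro continuous_on_mult fcK dphi_cont)
      fix x assume "x \<notin> {p..q}"
      then have "x \<le> s - dn n \<or> t + dn n \<le> x" using dn[of n] by (auto simp: p_def q_def)
      then show "f x * dphi s t (dn n) x = 0" using dphi_zero[OF dn(1)] st by auto
    qed
    also have "\<dots> = I s n - I t n"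
    proof -
      have c: "continuous_on {p..q} (\<lambda>x. f x * (rr ((x - c) / dn n) / dn n))" for c
        using dn[of n] by (intro continuous_on_mult fcK continuous_on_divide rr_comp lin_cont continuous_on_const) auto
      have eq: "(\<lambda>x. f x * dphi s t (dn n) x) = (\<lambda>x. f x * (rr ((x - s) / dn n) / dn n) - f x * (rr ((x - t) / dn n) / dn n))"
        by (simp add: dphi_def right_diff_distrib)
      show ?thesis unfolding I_def eq
        by (rule integral_diff[OF integrable_continuous_interval[OF c] integrable_continuous_interval[OF c]])
    qed
    finally show ?thesis .
  qed
  have limI: "(\<lambda>n. I c n) \<longlonglongrightarrow> f c" if c: "c \<in> {s, t}" for c
  proof (rule LIMSEQ_I)
    fix e :: real assume e: "0 < e"
    have cK: "c \<in> {p..q}" using c d0 st by (auto simp: p_def q_def)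
    obtain \<delta> where \<delta>: "0 < \<delta>" "\<And>x. x \<in> {p..q} \<Longrightarrow> dist x c < \<delta> \<Longrightarrow> dist (f x) (f c) < e / 2"
      using fcK cK e unfolding continuous_on_iff by (metis half_gt_zero)
    obtain N where N: "\<And>n. n \<ge> N \<Longrightarrow> dn n < \<delta>"
      using eventually_small[OF \<delta>(1), of d0] by (auto simp: dn_def eventually_sequentially)
    show "\<exists>N. \<forall>n\<ge>N. norm (I c n - f c) < e"
    proof (intro exI allI impI)
      fix n assume n: "N \<le> n"
      have "\<bar>I c n - f c\<bar> \<le> e / 2"
        unfolding I_def
      proof (rule moll[OF fcK dn(1)])
        show "p \<le> c - dn n" "c + dn n \<le> q" using c dn[of n] st by (auto simp: p_def q_def)
        fix x assume "x \<in> {p..q}" "\<bar>x - c\<bar> \<le> dn n"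
        then show "\<bar>f x - f c\<bar> \<le> e / 2" using \<delta>(2)[of x] N[OF n] by (simp add: dist_real_def)
      qed
      then show "norm (I c n - f c) < e" using e by simp
    qed
  qed
  have L1: "(\<lambda>n. LINT x:{a<..<b}|lebesgue. f x * dphi s t (dn n) x) \<longlonglongrightarrow> f s - f t"
    unfolding lhs by (intro tendsto_diff limI) auto
  have L2: "(\<lambda>n. LINT x:{a<..<b}|lebesgue. g x * phi s t (dn n) x) \<longlonglongrightarrow>
            (LINT x:{a<..<b}|lebesgue. g x * indicator {s<..<t} x)"
  proof (rule dom_conv_mult[OF gi])
    show "phi s t (dn n) \<in> borel_measurable lebesgue" for n by (intro cont_meas_leb phi_cont)
    show "indicat_real {s<..<t} \<in> borel_measurable lebesgue" by (intro borel_measurable_indicator) (meson fmeasurableD lmeasurable_interval(2))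
    show "\<bar>phi s t (dn n) x\<bar> \<le> 1" for n x by (rule phi_bound)
    have "AE x in lebesgue. x \<notin> {s, t}"
      by (rule AE_discrete_difference) auto
    then show "AE x in lebesgue. (\<lambda>n. phi s t (dn n) x) \<longlonglongrightarrow> indicat_real {s<..<t} x"
      by eventually_elim (use phi_pointwise st d0 in \<open>auto simp: dn_def\<close>)
  qed
  have "(LINT x:{a<..<b}|lebesgue. g x * indicator {s<..<t} x) = (LINT x:{s<..<t}|lebesgue. g x)"
    unfolding set_lebesgue_integral_def
    by (rule Bochner_Integration.integral_cong) (use st in \<open>auto simp: indicator_def\<close>)
  with L2 have L2': "(\<lambda>n. - (LINT x:{a<..<b}|lebesgue. g x * phi s t (dn n) x)) \<longlonglongrightarrow> - (LINT x:{s<..<t}|lebesgue. g x)"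
    by (auto intro: tendsto_minus)
  have "f s - f t = - (LINT x:{s<..<t}|lebesgue. g x)"
    using LIMSEQ_unique[OF L1] L2' weak by simp
  then show ?thesis by simp
qed

lemma T_interval:
  fixes T :: "real set"
  assumes T: "(\<exists>T0>0. T = {0..T0}) \<or> T = {0..}" and s: "s \<in> T" and t: "t \<in> T"
  shows "{s..t} \<subseteq> T"
  using T s t by (auto intro: order_trans)

lemma FTC_T:
  fixes f g :: "real \<Rightarrow> real"
  assumes T: "(\<exists>T0>0. T = {0..T0}) \<or> T = {0..}"
    and H: "\<And>a b. a \<in> T \<Longrightarrow> b \<in> T \<Longrightarrow> H1_weak_deriv a b f g"
    and fc: "continuous_on T f"
    and s: "s \<in> T" and t: "t \<in> T" and st: "s \<le> t"
  shows "f t - f s = (LINT x:{s<..<t}|lebesgue. g x)"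
proof (cases "s = t")
  case True then show ?thesis by (simp add: set_lebesgue_integral_def)
next
  case False
  then have st: "s < t" using st by simp
  have Hst: "H1_weak_deriv s t f g" using H s t by blast
  have gi: "set_integrable lebesgue {s<..<t} g"
    using Hst by (auto simp: H1_weak_deriv_def intro: L2_integrable)
  have fc': "continuous_on {s..t} f" using T_interval[OF T s t] by (intro continuous_on_subset[OF fc])
  define d0 where "d0 = (t - s) / 3"
  have d0: "0 < d0" using st by (simp add: d0_def)
  define e where "e n = d0 / real (Suc n)" for n
  have e: "0 < e n" "e n \<le> d0" for n using d0 by (auto simp: e_def field_simps)
  have eq: "f (t - e n) - f (s + e n) = (LINT x:{s + e n<..<t - e n}|lebesgue. g x)" for n
  proof (rule weak_FTC[OF Hst fc'])
    show "s < s + e n" "s + e n < t - e n" "t - e n < t" using e[of n] st by (auto simp: d0_def)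
  qed
  have e0: "e \<longlonglongrightarrow> 0"
  proof -
    have "(\<lambda>n. d0 * inverse (real (Suc n))) \<longlonglongrightarrow> d0 * 0"
      by (intro tendsto_intros LIMSEQ_inverse_real_of_nat)
    moreover have "e = (\<lambda>n. d0 * inverse (real (Suc n)))" by (simp add: e_def divide_inverse fun_eq_iff)
    ultimately show ?thesis by simp
  qed
  have lim1: "(\<lambda>n. f (t - e n) - f (s + e n)) \<longlonglongrightarrow> f t - f s"
  proof (intro tendsto_diff)
    have "(\<lambda>n. t - e n) \<longlonglongrightarrow> t - 0" by (intro tendsto_intros e0)
    moreover have "t - e n \<in> {s..t}" for n using e[of n] st by (auto simp: d0_def)
    ultimately show "(\<lambda>n. f (t - e n)) \<longlonglongrightarrow> f t"
      using fc' st unfolding continuous_on_sequentially by (auto simp: o_def)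
    have "(\<lambda>n. s + e n) \<longlonglongrightarrow> s + 0" by (intro tendsto_intros e0)
    moreover have "s + e n \<in> {s..t}" for n using e[of n] st by (auto simp: d0_def)
    ultimately show "(\<lambda>n. f (s + e n)) \<longlonglongrightarrow> f s"
      using fc' st unfolding continuous_on_sequentially by (auto simp: o_def)
  qed
  have lim2: "(\<lambda>n. LINT x:{s<..<t}|lebesgue. g x * indicator {s + e n<..<t - e n} x) \<longlonglongrightarrow>
     (LINT x:{s<..<t}|lebesgue. g x * indicator {s<..<t} x)"
  proof (rule dom_conv_mult[OF gi])
    show "indicat_real {s + e n<..<t - e n} \<in> borel_measurable lebesgue" for n
      by (intro borel_measurable_indicator) (meson fmeasurableD lmeasurable_interval(2))
    show "indicat_real {s<..<t} \<in> borel_measurable lebesgue"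
      by (intro borel_measurable_indicator) (meson fmeasurableD lmeasurable_interval(2))
    show "\<bar>indicat_real {s + e n<..<t - e n} x\<bar> \<le> 1" for n x by (simp add: indicator_def)
    show "AE x in lebesgue. (\<lambda>n. indicat_real {s + e n<..<t - e n} x) \<longlonglongrightarrow> indicat_real {s<..<t} x"
    proof (rule AE_I2)
      fix x
      show "(\<lambda>n. indicat_real {s + e n<..<t - e n} x) \<longlonglongrightarrow> indicat_real {s<..<t} x"
      proof (cases "s < x \<and> x < t")
        case True
        define m where "m = min (x - s) (t - x)"
        have m: "0 < m" using True by (simp add: m_def)
        show ?thesis
        proof (rule tendsto_eventually)
          show "\<forall>\<^sub>F n in sequentially. indicat_real {s + e n<..<t - e n} x = indicat_real {s<..<t} x"
            using eventually_small[OF m, of d0]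
            by (rule eventually_mono) (use True in \<open>auto simp: e_def m_def indicator_def\<close>)
        qed
      next
        case False
        then have z: "indicat_real {s + e n<..<t - e n} x = 0" for n using e[of n] by (auto simp: indicator_def)
        have "indicat_real {s<..<t} x = 0" using False by (simp add: indicator_def)
        then show ?thesis unfolding z by simp
      qed
    qed
  qed
  have r1: "(LINT x:{s<..<t}|lebesgue. g x * indicator {s + e n<..<t - e n} x) = (LINT x:{s + e n<..<t - e n}|lebesgue. g x)" for n
    unfolding set_lebesgue_integral_def
    by (rule Bochner_Integration.integral_cong) (use e[of n] in \<open>auto simp: indicator_def\<close>)
  have r2: "(LINT x:{s<..<t}|lebesgue. g x * indicator {s<..<t} x) = (LINT x:{s<..<t}|lebesgue. g x)"
    unfolding set_lebesgue_integral_def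
    by (rule Bochner_Integration.integral_cong) (auto simp: indicator_def)
  from lim2 have "(\<lambda>n. f (t - e n) - f (s + e n)) \<longlonglongrightarrow> (LINT x:{s<..<t}|lebesgue. g x)"
    unfolding r1 r2 eq .
  with lim1 show ?thesis using LIMSEQ_unique by blast
qed

lemma ae_zero_intervals:
  fixes h :: "real \<Rightarrow> real"
  assumes hi: "set_integrable lebesgue {a<..<b} h"
    and z: "\<And>x. a \<le> x \<Longrightarrow> x \<le> b \<Longrightarrow> (LINT t:{x<..<b}|lebesgue. h t) = 0"
  shows "AE t in lebesgue. t \<in> {a<..<b} \<longrightarrow> h t = 0"
proof (cases "a < b")
  case False
  then show ?thesis by auto
next
  case ab: True
  define k where "k t = indicator {a<..<b} t * h t" for t
  have ki: "integrable lebesgue k" using hi by (simp add: set_integrable_def k_def[abs_def])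
  have kz: "integral\<^sup>L lebesgue (\<lambda>t. k t * indicator {x<..} t) = 0" for x
  proof (cases "x < b")
    case True
    have "(\<lambda>t. k t * indicator {x<..} t) = (\<lambda>t. indicator {max a x<..<b} t *\<^sub>R h t)"
      by (auto simp: k_def indicator_def fun_eq_iff)
    then show ?thesis using z[of "max a x"] True ab by (simp add: set_lebesgue_integral_def)
  next
    case False
    then have "(\<lambda>t. k t * indicator {x<..} t) = (\<lambda>t. 0)"
      by (auto simp: k_def indicator_def fun_eq_iff)
    then show ?thesis by simp
  qed
  have kb: "k \<in> borel_measurable (completion lborel)" using ki by (rule borel_measurable_integrable)
  obtain k' where k'b: "k' \<in> borel_measurable lborel" and kk': "AE t in lborel. k t = k' t"
    using completion_ex_borel_measurable_real[OF kb] by blast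
  have kk'L: "AE t in lebesgue. k t = k' t" using kk' by (rule AE_completion)
  have k'bL: "k' \<in> borel_measurable lebesgue" using k'b by (rule measurable_completion)
  have k'iL: "integrable lebesgue k'" using integrable_cong_AE[OF kb k'bL kk'L] ki by simp
  have k'i: "integrable lborel k'" using k'iL integrable_completion[OF k'b] by simp
  have k'z: "integral\<^sup>L lborel (\<lambda>t. k' t * indicator {x<..} t) = 0" for x
  proof -
    have m: "(\<lambda>t. k' t * indicator {x<..} t) \<in> borel_measurable lborel" using k'b by measurable
    have "integral\<^sup>L lborel (\<lambda>t. k' t * indicator {x<..} t) = integral\<^sup>L lebesgue (\<lambda>t. k' t * indicator {x<..} t)"
      using integral_completion[OF m] by simp
    also have "\<dots> = integral\<^sup>L lebesgue (\<lambda>t. k t * indicator {x<..} t)"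
    proof (rule integral_cong_AE)
      show "(\<lambda>t. k' t * indicator {x<..} t) \<in> borel_measurable lebesgue"
        using m by (rule measurable_completion)
      show "(\<lambda>t. k t * indicator {x<..} t) \<in> borel_measurable lebesgue"
        using kb by (intro borel_measurable_times) (auto intro: measurable_completion)
      show "AE t in lebesgue. k' t * indicat_real {x<..} t = k t * indicat_real {x<..} t"
        using kk'L by eventually_elim simp
    qed
    finally show ?thesis using kz by simp
  qed
  define P where "P t = max 0 (k' t)" for t
  define N where "N t = max 0 (- k' t)" for t
  have Peq: "P t = (\<bar>k' t\<bar> + k' t) / 2" for t by (simp add: P_def max_def)
  have Neq: "N t = (\<bar>k' t\<bar> - k' t) / 2" for t by (simp add: N_def max_def)
  have Pi: "integrable lborel P" unfolding Peq[abs_def] using Bochner_Integration.integrable_add[OF integrable_abs[OF k'i] k'i] by (rule integrable_divide)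
  have Ni: "integrable lborel N" unfolding Neq[abs_def] using Bochner_Integration.integrable_diff[OF integrable_abs[OF k'i] k'i] by (rule integrable_divide)
  have Pb: "P \<in> borel_measurable lborel" using Pi by (rule borel_measurable_integrable)
  have Nb: "N \<in> borel_measurable lborel" using Ni by (rule borel_measurable_integrable)
  have PNeq: "integral\<^sup>L lborel (\<lambda>t. P t * indicator {x<..} t) = integral\<^sup>L lborel (\<lambda>t. N t * indicator {x<..} t)" for x
  proof -
    have i1: "integrable lborel (\<lambda>t. P t * indicator {x<..} t)" using Pi by (intro integrable_real_mult_indicator) simp
    have i2: "integrable lborel (\<lambda>t. N t * indicator {x<..} t)" using Ni by (intro integrable_real_mult_indicator) simp
    have "integral\<^sup>L lborel (\<lambda>t. P t * indicator {x<..} t) - integral\<^sup>L lborel (\<lambda>t. N t * indicator {x<..} t)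
        = integral\<^sup>L lborel (\<lambda>t. P t * indicator {x<..} t - N t * indicator {x<..} t)"
      using i1 i2 by simp
    also have "(\<lambda>t. P t * indicator {x<..} t - N t * indicator {x<..} t) = (\<lambda>t. k' t * indicator {x<..} t)"
      by (auto simp: P_def N_def max_def fun_eq_iff)
    finally show ?thesis using k'z[of x] by simp
  qed
  define M1 where "M1 = density lborel (\<lambda>t. ennreal (P t))"
  define M2 where "M2 = density lborel (\<lambda>t. ennreal (N t))"
  have em: "emeasure (density lborel (\<lambda>t. ennreal (F t))) {x<..} = ennreal (integral\<^sup>L lborel (\<lambda>t. F t * indicator {x<..} t))"
    if Fi: "integrable lborel F" and Fn: "\<And>t. 0 \<le> F t" for F and x :: real
  proof -
    have Fb: "F \<in> borel_measurable lborel" using Fi by (rule borel_measurable_integrable)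
    have "emeasure (density lborel (\<lambda>t. ennreal (F t))) {x<..} = (\<integral>\<^sup>+t\<in>{x<..}. ennreal (F t) \<partial>lborel)"
      using Fb by (subst emeasure_density) (auto simp: borel_open)
    also have "\<dots> = (\<integral>\<^sup>+ t. ennreal (F t * indicator {x<..} t) \<partial>lborel)" by (rule nn_integral_set_ennreal)
    also have "\<dots> = ennreal (integral\<^sup>L lborel (\<lambda>t. F t * indicator {x<..} t))"
      by (rule nn_integral_eq_integral) (use Fi Fn in \<open>auto intro: integrable_real_mult_indicator\<close>)
    finally show ?thesis .
  qed
  have Pn: "0 \<le> P t" "0 \<le> N t" for t by (auto simp: P_def N_def)
  have "M1 = M2"
  proof (rule measure_eqI_lessThan)
    show "sets M1 = sets borel" "sets M2 = sets borel" by (simp_all add: M1_def M2_def)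
    show "emeasure M1 {x<..} < \<infinity>" for x unfolding M1_def using em[OF Pi] Pn by simp
    show "emeasure M1 {x<..} = emeasure M2 {x<..}" for x
      unfolding M1_def M2_def using em[OF Pi] em[OF Ni] Pn PNeq by simp
  qed
  then have "AE t in lborel. ennreal (P t) = ennreal (N t)"
    unfolding M1_def M2_def
    using sigma_finite_measure.density_unique_iff[OF sigma_finite_lborel, of "\<lambda>t. ennreal (P t)" "\<lambda>t. ennreal (N t)"] Pb Nb
    by simp
  then have "AE t in lborel. k' t = 0"
    by eventually_elim (auto simp: P_def N_def max_def split: if_splits)
  then have "AE t in lebesgue. k' t = 0" by (rule AE_completion)
  with kk'L show ?thesis
    by eventually_elim (auto simp: k_def indicator_def)
qed

lemma integrable_bdd_mult:
  fixes g h :: "'a \<Rightarrow> real"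
  assumes gi: "integrable M g" and hm: "h \<in> borel_measurable M" and hb: "\<And>x. \<bar>h x\<bar> \<le> C"
  shows "integrable M (\<lambda>x. g x * h x)"
proof (rule Bochner_Integration.integrable_bound[of M "\<lambda>x. C * \<bar>g x\<bar>"])
  show "integrable M (\<lambda>x. C * \<bar>g x\<bar>)" using gi by (intro integrable_mult_right integrable_abs)
  show "(\<lambda>x. g x * h x) \<in> borel_measurable M"
    using borel_measurable_integrable[OF gi] hm by (rule borel_measurable_times)
  show "AE x in M. norm (g x * h x) \<le> norm (C * \<bar>g x\<bar>)"
  proof (rule AE_I2)
    fix x
    have "0 \<le> C" using hb[of x] by linarith
    have "\<bar>g x * h x\<bar> \<le> \<bar>g x\<bar> * C" unfolding abs_mult by (intro mult_left_mono hb) simp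
    then show "norm (g x * h x) \<le> norm (C * \<bar>g x\<bar>)" using \<open>0 \<le> C\<close> by (simp add: abs_mult mult.commute)
  qed
qed

lemma pred_gt_pair[measurable]: "Measurable.pred (borel \<Otimes>\<^sub>M borel) (\<lambda>x::real \<times> real. snd x \<in> {fst x<..})"
  unfolding greaterThan_iff by measurable

lemma pred_lt_pair[measurable]: "Measurable.pred (borel \<Otimes>\<^sub>M borel) (\<lambda>x::real \<times> real. snd x \<in> {..<fst x})"
  unfolding lessThan_iff by measurable

lemma sq_integral_lborel:
  fixes g :: "real \<Rightarrow> real"
  assumes gi: "integrable lborel g"
  shows "(integral\<^sup>L lborel g)\<^sup>2 = 2 * integral\<^sup>L lborel (\<lambda>x. g x * integral\<^sup>L lborel (\<lambda>y. g y * indicator {..<x} y))"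
proof -
  have gb[measurable]: "g \<in> borel_measurable borel"
    using borel_measurable_integrable[OF gi] by simp
  define G where "G x y = g x * (g y * indicator {x<..} y)" for x y :: real
  have Gm: "(\<lambda>(x, y). G x y) \<in> borel_measurable (lborel \<Otimes>\<^sub>M lborel)"
    unfolding G_def by measurable
  define C where "C = integral\<^sup>L lborel (\<lambda>y. \<bar>g y\<bar>)"
  have bnd: "\<bar>integral\<^sup>L lborel (\<lambda>y. g y * indicator A y)\<bar> \<le> C" if "A \<in> sets borel" for A
  proof -
    have "\<bar>integral\<^sup>L lborel (\<lambda>y. g y * indicator A y)\<bar> \<le> integral\<^sup>L lborel (\<lambda>y. \<bar>g y * indicator A y\<bar>)"
      by (rule integral_abs_bound)
    also have "\<dots> \<le> C" unfolding C_def
    proof (rule integral_mono)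
      show "integrable lborel (\<lambda>y. \<bar>g y * indicator A y\<bar>)"
        using gi that by (intro integrable_abs integrable_real_mult_indicator) auto
      show "integrable lborel (\<lambda>y. \<bar>g y\<bar>)" using gi by simp
    qed (auto simp: indicator_def abs_mult)
    finally show ?thesis .
  qed
  have Gi: "integrable (lborel \<Otimes>\<^sub>M lborel) (\<lambda>(x, y). G x y)"
  proof (rule lborel_pair.Fubini_integrable)
    show "(\<lambda>(x, y). G x y) \<in> borel_measurable (lborel \<Otimes>\<^sub>M lborel)" by (rule Gm)
    have eqn: "(\<lambda>x. \<integral>y. norm (case (x, y) of (x, y) \<Rightarrow> G x y) \<partial>lborel) = (\<lambda>x. \<bar>g x\<bar> * integral\<^sup>L lborel (\<lambda>y. \<bar>g y\<bar> * indicator {x<..} y))"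
      by (auto simp: G_def abs_mult fun_eq_iff indicator_def)
    have "integrable lborel (\<lambda>x. \<bar>g x\<bar> * integral\<^sup>L lborel (\<lambda>y. \<bar>g y\<bar> * indicator {x<..} y))"
    proof (rule integrable_bdd_mult[where C=C])
      show "integrable lborel (\<lambda>x. \<bar>g x\<bar>)" using gi by simp
      show "(\<lambda>x. integral\<^sup>L lborel (\<lambda>y. \<bar>g y\<bar> * indicator {x<..} y)) \<in> borel_measurable lborel"
        by (rule lborel.borel_measurable_lebesgue_integral) measurable
      fix x
      show "\<bar>integral\<^sup>L lborel (\<lambda>y. \<bar>g y\<bar> * indicator {x<..} y)\<bar> \<le> C"
      proof -
        have i: "integrable lborel (\<lambda>y. \<bar>g y\<bar> * indicator {x<..} y)"
          using gi by (intro integrable_real_mult_indicator) auto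
        have "0 \<le> integral\<^sup>L lborel (\<lambda>y. \<bar>g y\<bar> * indicator {x<..} y)" by (rule Bochner_Integration.integral_nonneg) auto
        moreover have "integral\<^sup>L lborel (\<lambda>y. \<bar>g y\<bar> * indicator {x<..} y) \<le> C"
          unfolding C_def by (rule integral_mono[OF i]) (use gi in \<open>auto simp: indicator_def\<close>)
        ultimately show ?thesis by simp
      qed
    qed
    then show "integrable lborel (\<lambda>x. \<integral>y. norm (case (x, y) of (x, y) \<Rightarrow> G x y) \<partial>lborel)"
      unfolding eqn .
    show "AE x in lborel. integrable lborel (\<lambda>y. case (x, y) of (x, y) \<Rightarrow> G x y)"
      using gi by (auto simp: G_def intro!: integrable_mult_right integrable_real_mult_indicator)
  qed
  have fub: "integral\<^sup>L lborel (\<lambda>y. integral\<^sup>L lborel (\<lambda>x. G x y)) = integral\<^sup>L lborel (\<lambda>x. integral\<^sup>L lborel (\<lambda>y. G x y))"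
    using lborel_pair.Fubini_integral[OF Gi] by simp
  define Wf where "Wf x = integral\<^sup>L lborel (\<lambda>y. g y * indicator {..<x} y)" for x
  define V where "V x = integral\<^sup>L lborel (\<lambda>y. g y * indicator {x<..} y)" for x
  have l: "integral\<^sup>L lborel (\<lambda>x. G x y) = g y * Wf y" for y
  proof -
    have "(\<lambda>x. G x y) = (\<lambda>x. g y * (g x * indicator {..<y} x))"
      by (auto simp: G_def indicator_def fun_eq_iff)
    then show ?thesis unfolding Wf_def by simp
  qed
  have r: "integral\<^sup>L lborel (\<lambda>y. G x y) = g x * V x" for x
    unfolding V_def G_def by simp
  have WV: "Wf x + V x = integral\<^sup>L lborel g" for x
  proof -
    have "Wf x + V x = integral\<^sup>L lborel (\<lambda>y. g y * indicator {..<x} y + g y * indicator {x<..} y)"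
      unfolding Wf_def V_def using gi by (intro Bochner_Integration.integral_add[symmetric] integrable_real_mult_indicator) auto
    also have "\<dots> = integral\<^sup>L lborel g"
      by (rule integral_discrete_difference[where X="{x}"]) (auto simp: indicator_def)
    finally show ?thesis .
  qed
  have Wm: "Wf \<in> borel_measurable lborel" unfolding Wf_def
    by (rule lborel.borel_measurable_lebesgue_integral) measurable
  have Vm: "V \<in> borel_measurable lborel" unfolding V_def
    by (rule lborel.borel_measurable_lebesgue_integral) measurable
  have iW: "integrable lborel (\<lambda>x. g x * Wf x)"
    by (rule integrable_bdd_mult[OF gi Wm, where C=C]) (use bnd in \<open>auto simp: Wf_def\<close>)
  have iV: "integrable lborel (\<lambda>x. g x * V x)"
    by (rule integrable_bdd_mult[OF gi Vm, where C=C]) (use bnd in \<open>auto simp: V_def\<close>)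
  have "(integral\<^sup>L lborel g)\<^sup>2 = integral\<^sup>L lborel (\<lambda>x. g x * integral\<^sup>L lborel g)"
    by (simp add: power2_eq_square)
  also have "\<dots> = integral\<^sup>L lborel (\<lambda>x. g x * Wf x + g x * V x)"
    by (simp only: distrib_left[symmetric] WV)
  also have "\<dots> = integral\<^sup>L lborel (\<lambda>x. g x * Wf x) + integral\<^sup>L lborel (\<lambda>x. g x * V x)"
    using iW iV by simp
  also have "integral\<^sup>L lborel (\<lambda>x. g x * V x) = integral\<^sup>L lborel (\<lambda>x. g x * Wf x)"
    using fub l r by simp
  finally show ?thesis by (simp add: Wf_def)
qed

lemma sq_set_integral:
  fixes h :: "real \<Rightarrow> real"
  assumes hi: "set_integrable lebesgue {a<..<b} h"
  shows "(LINT x:{a<..<b}|lebesgue. h x)\<^sup>2 = 2 * (LINT x:{a<..<b}|lebesgue. h x * (LINT y:{a<..<x}|lebesgue. h y))"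
proof -
  define k where "k t = indicator {a<..<b} t * h t" for t
  have ki: "integrable lebesgue k" using hi by (simp add: set_integrable_def k_def[abs_def])
  have kb: "k \<in> borel_measurable (completion lborel)" using ki by (rule borel_measurable_integrable)
  obtain k' where k'b: "k' \<in> borel_measurable lborel" and kk': "AE t in lborel. k t = k' t"
    using completion_ex_borel_measurable_real[OF kb] by blast
  have kk'L: "AE t in lebesgue. k t = k' t" using kk' by (rule AE_completion)
  have k'bL: "k' \<in> borel_measurable lebesgue" using k'b by (rule measurable_completion)
  have k'iL: "integrable lebesgue k'" using integrable_cong_AE[OF kb k'bL kk'L] ki by simp
  have k'i: "integrable lborel k'" using k'iL integrable_completion[OF k'b] by simp
  have k'b2[measurable]: "k' \<in> borel_measurable borel" using k'b by simp
  define Wf where "Wf x = integral\<^sup>L lborel (\<lambda>y. k' y * indicator {..<x} y)" for x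
  have Wm: "Wf \<in> borel_measurable lborel" unfolding Wf_def
    by (rule lborel.borel_measurable_lebesgue_integral) measurable
  have Wf_eq: "Wf x = integral\<^sup>L lebesgue (\<lambda>y. k y * indicator {..<x} y)" for x
  proof -
    have m: "(\<lambda>y. k' y * indicator {..<x} y) \<in> borel_measurable lborel" by measurable
    have "Wf x = integral\<^sup>L lebesgue (\<lambda>y. k' y * indicator {..<x} y)"
      unfolding Wf_def using integral_completion[OF m] by simp
    also have "\<dots> = integral\<^sup>L lebesgue (\<lambda>y. k y * indicator {..<x} y)"
    proof (rule integral_cong_AE)
      show "(\<lambda>y. k' y * indicator {..<x} y) \<in> borel_measurable lebesgue"
        using m by (rule measurable_completion)
      show "(\<lambda>y. k y * indicator {..<x} y) \<in> borel_measurable lebesgue"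
        using kb by (intro borel_measurable_times) (auto intro: measurable_completion)
      show "AE y in lebesgue. k' y * indicat_real {..<x} y = k y * indicat_real {..<x} y"
        using kk'L by eventually_elim simp
    qed
    finally show ?thesis .
  qed
  have Wf_eq2: "Wf x = (LINT y:{a<..<x}|lebesgue. h y)" if "x \<in> {a<..<b}" for x
  proof -
    have "(\<lambda>y. k y * indicator {..<x} y) = (\<lambda>y. indicator {a<..<x} y *\<^sub>R h y)"
      using that by (auto simp: k_def indicator_def fun_eq_iff)
    then show ?thesis by (simp add: Wf_eq set_lebesgue_integral_def)
  qed
  have sq: "(integral\<^sup>L lborel k')\<^sup>2 = 2 * integral\<^sup>L lborel (\<lambda>x. k' x * Wf x)"
    using sq_integral_lborel[OF k'i] by (simp add: Wf_def)
  have e1: "integral\<^sup>L lborel k' = (LINT x:{a<..<b}|lebesgue. h x)"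
  proof -
    have "integral\<^sup>L lborel k' = integral\<^sup>L lebesgue k'" using integral_completion[OF k'b] by simp
    also have "\<dots> = integral\<^sup>L lebesgue k"
      by (rule integral_cong_AE[OF k'bL kb]) (use kk'L in \<open>eventually_elim, simp\<close>)
    finally show ?thesis by (simp add: set_lebesgue_integral_def k_def[abs_def])
  qed
  have e2: "integral\<^sup>L lborel (\<lambda>x. k' x * Wf x) = (LINT x:{a<..<b}|lebesgue. h x * (LINT y:{a<..<x}|lebesgue. h y))"
  proof -
    have m: "(\<lambda>x. k' x * Wf x) \<in> borel_measurable lborel" using k'b Wm by (rule borel_measurable_times)
    have "integral\<^sup>L lborel (\<lambda>x. k' x * Wf x) = integral\<^sup>L lebesgue (\<lambda>x. k' x * Wf x)"
      using integral_completion[OF m] by simp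
    also have "\<dots> = integral\<^sup>L lebesgue (\<lambda>x. k x * Wf x)"
    proof (rule integral_cong_AE)
      show "(\<lambda>x. k' x * Wf x) \<in> borel_measurable lebesgue" using m by (rule measurable_completion)
      show "(\<lambda>x. k x * Wf x) \<in> borel_measurable lebesgue"
        using kb Wm by (intro borel_measurable_times) (auto intro: measurable_completion)
      show "AE x in lebesgue. k' x * Wf x = k x * Wf x" using kk'L by eventually_elim simp
    qed
    also have "(\<lambda>x. k x * Wf x) = (\<lambda>x. indicator {a<..<b} x *\<^sub>R (h x * (LINT y:{a<..<x}|lebesgue. h y)))"
      by (auto simp: k_def Wf_eq2 fun_eq_iff indicator_def)
    finally show ?thesis by (simp add: set_lebesgue_integral_def)
  qed
  show ?thesis using sq e1 e2 by simp
qed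

lemma wg_sym: "weighted_graph w \<Longrightarrow> w i j = w j i" by (simp add: weighted_graph_def)
lemma wg_nonneg: "weighted_graph w \<Longrightarrow> 0 \<le> w i j" by (simp add: weighted_graph_def)

lemma deg_nonneg: "weighted_graph w \<Longrightarrow> 0 \<le> deg w i"
  unfolding deg_def by (intro sum_nonneg) (simp add: wg_nonneg)

lemma deg_zero_iff: "weighted_graph w \<Longrightarrow> deg w i = 0 \<longleftrightarrow> (\<forall>j. w i j = 0)"
  unfolding deg_def by (subst sum_nonneg_eq_0_iff) (auto simp: wg_nonneg)

lemma deg_cases:
  assumes wg: "weighted_graph w"
  shows "(\<forall>i. 0 < deg w i) \<or> (\<forall>i. deg w i = 0)"
proof (rule ccontr)
  assume "\<not> ?thesis"
  then obtain i k where i: "deg w i = 0" and k: "deg w k \<noteq> 0"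
    using deg_nonneg[OF wg] by (metis order_le_less)
  have wi: "\<And>j. w i j = 0" using i deg_zero_iff[OF wg] by blast
  have "(i, k) \<in> {(x, y). 0 < w x y}\<^sup>*" using wg by (simp add: weighted_graph_def)
  then show False
  proof (cases rule: converse_rtranclE)
    case base then show False using i k by simp
  next
    case (step y) then show False using wi[of y] by simp
  qed
qed

lemma lap_diff: "graph_laplacian w r U i - graph_laplacian w r V i = graph_laplacian w r (\<lambda>j. U j - V j) i"
  unfolding graph_laplacian_def by (simp add: right_diff_distrib[symmetric] sum_subtractf[symmetric] algebra_simps)

lemma mass_alt: "mass w r X = (\<Sum>i\<in>UNIV. deg w i powr r * X i)"
  unfolding mass_def inner_V_def by (simp add: mult.commute)

lemma mass_diff: "mass w r U - mass w r V = mass w r (\<lambda>i. U i - V i)"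
  unfolding mass_alt by (simp add: sum_subtractf[symmetric] right_diff_distrib)

lemma mean_diff: "mean w r U - mean w r V = mean w r (\<lambda>i. U i - V i)"
  unfolding mean_def by (simp add: mass_diff[symmetric] diff_divide_distrib)

lemma sym_sum0:
  fixes w :: "'v::finite \<Rightarrow> 'v \<Rightarrow> real"
  assumes sym: "\<And>i j. w i j = w j i"
  shows "(\<Sum>i\<in>UNIV. \<Sum>j\<in>UNIV. w i j * (Z i - Z j)) = 0"
proof -
  have "(\<Sum>i\<in>UNIV. \<Sum>j\<in>UNIV. w i j * Z j) = (\<Sum>j\<in>UNIV. \<Sum>i\<in>UNIV. w i j * Z j)" by (rule sum.swap)
  also have "\<dots> = (\<Sum>i\<in>UNIV. \<Sum>j\<in>UNIV. w i j * Z i)"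
    by (intro sum.cong refl) (metis sym)
  finally show ?thesis by (simp add: right_diff_distrib sum_subtractf)
qed

lemma sym_sum_nonneg:
  fixes w :: "'v::finite \<Rightarrow> 'v \<Rightarrow> real"
  assumes sym: "\<And>i j. w i j = w j i" and nn: "\<And>i j. 0 \<le> w i j"
  shows "0 \<le> (\<Sum>i\<in>UNIV. (\<Sum>j\<in>UNIV. w i j * (Z i - Z j)) * Z i)"
proof -
  have A: "(\<Sum>i\<in>UNIV. \<Sum>j\<in>UNIV. w i j * (Z i - Z j) * Z i) = (\<Sum>j\<in>UNIV. \<Sum>i\<in>UNIV. w i j * (Z i - Z j) * Z i)"
    by (rule sum.swap)
  also have "\<dots> = (\<Sum>i\<in>UNIV. \<Sum>j\<in>UNIV. w i j * (Z j - Z i) * Z j)"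
    by (intro sum.cong refl) (metis sym)
  finally have A: "(\<Sum>i\<in>UNIV. \<Sum>j\<in>UNIV. w i j * (Z i - Z j) * Z i) = (\<Sum>i\<in>UNIV. \<Sum>j\<in>UNIV. w i j * (Z j - Z i) * Z j)" .
  have B: "(\<Sum>i\<in>UNIV. \<Sum>j\<in>UNIV. w i j * (Z i - Z j) * Z i) + (\<Sum>i\<in>UNIV. \<Sum>j\<in>UNIV. w i j * (Z j - Z i) * Z j)
      = (\<Sum>i\<in>UNIV. \<Sum>j\<in>UNIV. w i j * (Z i - Z j)\<^sup>2)"
    unfolding sum.distrib[symmetric] by (intro sum.cong refl) (simp add: power2_eq_square algebra_simps)
  have C: "0 \<le> (\<Sum>i\<in>UNIV. \<Sum>j\<in>UNIV. w i j * (Z i - Z j)\<^sup>2)"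
    by (intro sum_nonneg mult_nonneg_nonneg nn) simp
  have D: "(\<Sum>i\<in>UNIV. (\<Sum>j\<in>UNIV. w i j * (Z i - Z j)) * Z i) = (\<Sum>i\<in>UNIV. \<Sum>j\<in>UNIV. w i j * (Z i - Z j) * Z i)"
    by (simp only: sum_distrib_right)
  show ?thesis using A B C D by linarith
qed

lemma obst_prod:
  assumes oU: "B \<in> obstacle_set U" and oV: "G \<in> obstacle_set V"
  shows "(B i - G i) * (U i - V i) \<le> 0"
proof -
  have U: "\<forall>i. U i \<in> {0..1}" and V: "\<forall>i. V i \<in> {0..1}"
    using oU oV by (auto simp: obstacle_set_def split: if_splits)
  have Bc: "(U i = 0 \<longrightarrow> 0 \<le> B i) \<and> (0 < U i \<and> U i < 1 \<longrightarrow> B i = 0) \<and> (U i = 1 \<longrightarrow> B i \<le> 0)"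
    using oU U by (simp add: obstacle_set_def)
  have Gc: "(V i = 0 \<longrightarrow> 0 \<le> G i) \<and> (0 < V i \<and> V i < 1 \<longrightarrow> G i = 0) \<and> (V i = 1 \<longrightarrow> G i \<le> 0)"
    using oV V by (simp add: obstacle_set_def)
  have Ui: "0 \<le> U i" "U i \<le> 1" and Vi: "0 \<le> V i" "V i \<le> 1" using U V by auto
  consider "U i > V i" | "U i < V i" | "U i = V i" by linarith
  then show ?thesis
  proof cases
    case 1
    then have "B i \<le> 0" using Bc Ui Vi by (cases "U i = 1") auto
    moreover have "0 \<le> G i" using Gc Ui Vi 1 by (cases "V i = 0") auto
    ultimately show ?thesis using 1 by (simp add: mult_nonpos_nonneg)
  next
    case 2
    then have "0 \<le> B i" using Bc Ui Vi by (cases "U i = 0") auto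
    moreover have "G i \<le> 0" using Gc Ui Vi 2 by (cases "V i = 1") auto
    ultimately show ?thesis using 2 by (simp add: mult_nonneg_nonpos)
  qed simp
qed

lemma caseA:
  fixes w :: "'v::finite \<Rightarrow> 'v \<Rightarrow> real"
  assumes wg: "weighted_graph w" and dpos: "\<forall>i. 0 < deg w i" and eps: "0 < \<epsilon>"
   and eU: "\<forall>i. \<epsilon> * dU i + \<epsilon> * graph_laplacian w r U i - U i + mean w r U = B i - mean w r B"
   and eV: "\<forall>i. \<epsilon> * dV i + \<epsilon> * graph_laplacian w r V i - V i + mean w r V = G i - mean w r G"
   and oU: "B \<in> obstacle_set U" and oV: "G \<in> obstacle_set V"
  shows "mass w r (\<lambda>i. dU i - dV i) = 0"
    and "mass w r (\<lambda>i. U i - V i) = 0 \<Longrightarrow>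
         \<epsilon> * (\<Sum>i\<in>UNIV. deg w i powr r * (dU i - dV i) * (U i - V i)) \<le> (\<Sum>i\<in>UNIV. deg w i powr r * (U i - V i)\<^sup>2)"
proof -
  define Z where "Z i = U i - V i" for i
  define Y where "Y i = dU i - dV i" for i
  define \<zeta> where "\<zeta> i = B i - G i" for i
  define dg where "dg i = deg w i powr r" for i
  define Lz where "Lz i = (\<Sum>j\<in>UNIV. w i j * (Z i - Z j))" for i
  define q where "q = mean w r Z"
  define m where "m = mean w r \<zeta>"
  define M1 where "M1 = mass w r (\<lambda>_. 1)"
  have key: "\<epsilon> * Y i + \<epsilon> * graph_laplacian w r Z i - Z i + q = \<zeta> i - m" for i
  proof -
    have "\<epsilon> * Y i + \<epsilon> * (graph_laplacian w r U i - graph_laplacian w r V i) - Z i + (mean w r U - mean w r V)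
        = \<zeta> i - (mean w r B - mean w r G)"
      using eU[rule_format, of i] eV[rule_format, of i] unfolding Y_def Z_def \<zeta>_def by (simp add: algebra_simps)
    then show ?thesis unfolding lap_diff mean_diff q_def m_def Z_def[symmetric] \<zeta>_def[symmetric]
      by (simp add: Z_def[abs_def] \<zeta>_def[abs_def])
  qed
  have dgpos: "0 < dg i" for i using dpos[rule_format, of i] by (simp add: dg_def)
  have key2: "dg i * graph_laplacian w r Z i = Lz i" for i
  proof -
    have "dg i * deg w i powr (- r) = 1"
      using dpos[rule_format, of i] by (simp add: dg_def powr_add[symmetric])
    then show ?thesis unfolding graph_laplacian_def Lz_def by (simp add: mult.assoc[symmetric])
  qed
  have M1pos: "0 < M1" unfolding M1_def mass_alt dg_def[symmetric] using dgpos by (simp add: sum_pos)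
  have qM: "q * M1 = mass w r Z" unfolding q_def mean_def M1_def using M1pos by (simp add: M1_def)
  have mM: "m * M1 = mass w r \<zeta>" unfolding m_def mean_def M1_def using M1pos by (simp add: M1_def)
  have M1s: "M1 = (\<Sum>i\<in>UNIV. dg i)" by (simp add: M1_def mass_alt dg_def)
  have mass_dg: "mass w r X = (\<Sum>i\<in>UNIV. dg i * X i)" for X by (simp add: mass_alt dg_def)
  have per: "\<epsilon> * (dg i * Y i) + \<epsilon> * Lz i - dg i * Z i + q * dg i = dg i * \<zeta> i - m * dg i" for i
  proof -
    have "dg i * (\<epsilon> * Y i + \<epsilon> * graph_laplacian w r Z i - Z i + q) = dg i * (\<zeta> i - m)" using key[of i] by simp
    then show ?thesis using key2[of i] by (simp add: algebra_simps)
  qed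
  have sLz: "(\<Sum>i\<in>UNIV. Lz i) = 0" unfolding Lz_def by (rule sym_sum0) (rule wg_sym[OF wg])
  have "(\<Sum>i\<in>UNIV. \<epsilon> * (dg i * Y i) + \<epsilon> * Lz i - dg i * Z i + q * dg i) = (\<Sum>i\<in>UNIV. dg i * \<zeta> i - m * dg i)"
    using per by simp
  then have "\<epsilon> * mass w r Y + \<epsilon> * (\<Sum>i\<in>UNIV. Lz i) - mass w r Z + q * M1 = mass w r \<zeta> - m * M1"
    unfolding mass_dg M1s by (simp add: sum.distrib sum_subtractf sum_distrib_left)
  then have "\<epsilon> * mass w r Y = 0" using sLz qM mM by simp
  then show "mass w r (\<lambda>i. dU i - dV i) = 0" using eps by (simp add: Y_def[abs_def])
  assume mZ: "mass w r (\<lambda>i. U i - V i) = 0"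
  then have mZ': "(\<Sum>i\<in>UNIV. dg i * Z i) = 0" by (simp add: mass_dg Z_def[abs_def])
  have per2: "\<epsilon> * (dg i * Y i * Z i) = dg i * (Z i)\<^sup>2 - \<epsilon> * (Lz i * Z i) - q * (dg i * Z i) + dg i * \<zeta> i * Z i - m * (dg i * Z i)" for i
  proof -
    have "Z i * (\<epsilon> * (dg i * Y i) + \<epsilon> * Lz i - dg i * Z i + q * dg i) = Z i * (dg i * \<zeta> i - m * dg i)"
      using per[of i] by simp
    then show ?thesis by (simp add: algebra_simps power2_eq_square)
  qed
  have "\<epsilon> * (\<Sum>i\<in>UNIV. dg i * Y i * Z i) = (\<Sum>i\<in>UNIV. \<epsilon> * (dg i * Y i * Z i))" by (simp add: sum_distrib_left)
  also have "\<dots> = (\<Sum>i\<in>UNIV. dg i * (Z i)\<^sup>2) - \<epsilon> * (\<Sum>i\<in>UNIV. Lz i * Z i) - q * (\<Sum>i\<in>UNIV. dg i * Z i)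
       + (\<Sum>i\<in>UNIV. dg i * \<zeta> i * Z i) - m * (\<Sum>i\<in>UNIV. dg i * Z i)"
    unfolding per2 by (simp add: sum.distrib sum_subtractf sum_distrib_left)
  also have "\<dots> \<le> (\<Sum>i\<in>UNIV. dg i * (Z i)\<^sup>2)"
  proof -
    have "0 \<le> (\<Sum>i\<in>UNIV. Lz i * Z i)" unfolding Lz_def
      by (rule sym_sum_nonneg) (use wg_sym[OF wg] wg_nonneg[OF wg] in auto)
    moreover have "(\<Sum>i\<in>UNIV. dg i * \<zeta> i * Z i) \<le> 0"
    proof (rule sum_nonpos)
      fix i
      have "\<zeta> i * Z i \<le> 0" unfolding \<zeta>_def Z_def by (rule obst_prod[OF oU oV])
      then show "dg i * \<zeta> i * Z i \<le> 0" using dgpos[of i]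
        by (simp add: mult.assoc mult_nonneg_nonpos)
    qed
    moreover have "0 \<le> \<epsilon> * (\<Sum>i\<in>UNIV. Lz i * Z i)" using calculation(1) eps by simp
    ultimately show ?thesis using mZ' by simp
  qed
  finally show "\<epsilon> * (\<Sum>i\<in>UNIV. deg w i powr r * (dU i - dV i) * (U i - V i)) \<le> (\<Sum>i\<in>UNIV. deg w i powr r * (U i - V i)\<^sup>2)"
    by (simp add: dg_def Y_def Z_def)
qed

lemma caseB:
  fixes w :: "'v::finite \<Rightarrow> 'v \<Rightarrow> real"
  assumes wg: "weighted_graph w" and d0: "\<forall>i. deg w i = 0" and eps: "0 < \<epsilon>"
   and eU: "\<forall>i. \<epsilon> * dU i + \<epsilon> * graph_laplacian w r U i - U i + mean w r U = B i - mean w r B"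
   and eV: "\<forall>i. \<epsilon> * dV i + \<epsilon> * graph_laplacian w r V i - V i + mean w r V = G i - mean w r G"
   and oU: "B \<in> obstacle_set U" and oV: "G \<in> obstacle_set V"
  shows "\<epsilon> * (\<Sum>i\<in>UNIV. 1 * (dU i - dV i) * (U i - V i)) \<le> (\<Sum>i\<in>UNIV. 1 * (U i - V i)\<^sup>2)"
proof -
  have lap: "graph_laplacian w r X i = 0" for X i using d0 by (simp add: graph_laplacian_def)
  have mn: "mean w r X = 0" for X using d0 by (simp add: mean_def mass_alt)
  have per: "\<epsilon> * ((dU i - dV i) * (U i - V i)) \<le> (U i - V i)\<^sup>2" for i
  proof -
    have "\<epsilon> * dU i - U i = B i" "\<epsilon> * dV i - V i = G i"
      using eU[rule_format, of i] eV[rule_format, of i] by (simp_all add: lap mn)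
    then have e: "\<epsilon> * dU i - \<epsilon> * dV i = (B i - G i) + (U i - V i)" by simp
    have "\<epsilon> * ((dU i - dV i) * (U i - V i)) = (\<epsilon> * dU i - \<epsilon> * dV i) * (U i - V i)"
      by (simp add: algebra_simps)
    also have "\<dots> = (U i - V i)\<^sup>2 + (B i - G i) * (U i - V i)"
      unfolding e by (simp add: algebra_simps power2_eq_square)
    finally have "\<epsilon> * ((dU i - dV i) * (U i - V i)) = (U i - V i)\<^sup>2 + (B i - G i) * (U i - V i)" .
    then show ?thesis using obst_prod[OF oU oV, of i] by simp
  qed
  show ?thesis by (simp add: sum_distrib_left) (rule sum_mono, use per in simp)
qed

lemma set_integral_sum_fin:
  fixes f :: "'i \<Rightarrow> 'a \<Rightarrow> real"
  assumes fin: "finite I" and fi: "\<And>i. i \<in> I \<Longrightarrow> set_integrable M A (f i)"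
  shows "set_integrable M A (\<lambda>x. \<Sum>i\<in>I. f i x)"
    and "(LINT x:A|M. (\<Sum>i\<in>I. f i x)) = (\<Sum>i\<in>I. LINT x:A|M. f i x)"
proof -
  have eq: "(\<lambda>x. indicator A x *\<^sub>R (\<Sum>i\<in>I. f i x)) = (\<lambda>x. \<Sum>i\<in>I. indicator A x *\<^sub>R f i x)"
    by (simp add: sum_distrib_left)
  show "set_integrable M A (\<lambda>x. \<Sum>i\<in>I. f i x)"
    unfolding set_integrable_def eq using fi by (intro Bochner_Integration.integrable_sum) (simp add: set_integrable_def)
  show "(LINT x:A|M. (\<Sum>i\<in>I. f i x)) = (\<Sum>i\<in>I. LINT x:A|M. f i x)"
    unfolding set_lebesgue_integral_def eq using fi by (intro Bochner_Integration.integral_sum) (simp add: set_integrable_def)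
qed

lemma LINT_Ioo_eq_integral:
  fixes f :: "real \<Rightarrow> real"
  assumes c: "continuous_on {a..b} f"
  shows "(LINT x:{a<..<b}|lebesgue. f x) = integral {a..b} f"
proof -
  have ai: "f absolutely_integrable_on {a<..<b}"
    using absolutely_integrable_continuous_real[OF c] absolutely_integrable_on_Icc_iff_Ioo by blast
  have "(LINT x:{a<..<b}|lebesgue. f x) = integral {a<..<b} f"
    by (rule set_lebesgue_integral_eq_integral(2)[OF ai])
  also have "\<dots> = integral {a..b} f"
    by (rule integral_spike_set) (auto intro: negligible_subset[of "{a,b}"])
  finally show ?thesis .
qed

lemma gronwall0:
  fixes E :: "real \<Rightarrow> real"
  assumes cont: "continuous_on {0..t1} E" and nn: "\<And>x. x \<in> {0..t1} \<Longrightarrow> 0 \<le> E x" and K: "0 \<le> K"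
    and bd: "\<And>x. x \<in> {0..t1} \<Longrightarrow> E x \<le> K * integral {0..x} E"
    and x: "x \<in> {0..t1}"
  shows "E x = 0"
proof (cases "x = 0")
  case True
  then show ?thesis using bd[OF x] nn[OF x] by simp
next
  case False
  then have x0: "0 < x" using x by simp
  have sub: "{0..x} \<subseteq> {0..t1}" using x by auto
  have cx: "continuous_on {0..x} E" using continuous_on_subset[OF cont sub] .
  define I where "I y = integral {0..y} E" for y
  define F where "F y = exp (- K * y) * I y" for y
  have Ic: "continuous_on {0..x} I" unfolding I_def
    by (rule indefinite_integral_continuous_1[OF integrable_continuous_interval[OF cx]])
  have Fc: "continuous_on {0..x} F" unfolding F_def by (intro continuous_intros Ic)
  have Id: "(I has_real_derivative E z) (at z)" if "0 < z" "z < x" for z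
  proof -
    have "(I has_real_derivative E z) (at z within {0..x})"
      unfolding I_def by (rule integral_has_real_derivative[OF cx]) (use that in auto)
    moreover have "at z within {0..x} = at z" by (rule at_within_interior) (use that in auto)
    ultimately show ?thesis by simp
  qed
  have Fd: "(F has_real_derivative (exp (- K * z) * (E z - K * I z))) (at z)" if "0 < z" "z < x" for z
  proof -
    have "(F has_real_derivative (exp (- K * z) * (- K) * I z + exp (- K * z) * E z)) (at z)"
      unfolding F_def by (auto intro!: derivative_eq_intros Id[OF that])
    then show ?thesis by (simp add: algebra_simps)
  qed
  obtain l z where z: "0 < z" "z < x" and lz: "(F has_real_derivative l) (at z)" and eq: "F x - F 0 = (x - 0) * l"
    using MVT[OF x0 Fc] Fd real_differentiable_def by blast
  have "l = exp (- K * z) * (E z - K * I z)" using DERIV_unique[OF lz Fd[OF z]] .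
  moreover have "E z \<le> K * I z" using bd[of z] z x by (simp add: I_def)
  ultimately have "l \<le> 0" by (simp add: mult_nonneg_nonpos)
  moreover have "F 0 = 0" by (simp add: F_def I_def)
  ultimately have "F x \<le> 0" using eq x0 by (simp add: mult_pos_neg mult_nonneg_nonpos)
  then have "I x \<le> 0" by (simp add: F_def mult_le_0_iff)
  then have "E x \<le> 0" using bd[OF x] K by (simp add: I_def) (meson mult_nonneg_nonpos order_trans)
  then show ?thesis using nn[OF x] by simp
qed

lemma T_props:
  fixes T :: "real set"
  assumes T: "(\<exists>T0>0. T = {0..T0}) \<or> T = {0..}"
  shows "0 \<in> T" and "\<And>t. t \<in> T \<Longrightarrow> {0..t} \<subseteq> T" and "\<And>t. t \<in> T \<Longrightarrow> 0 \<le> t" and "closed T"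
  using T by auto

lemma set_integrable_bdd_mult:
  fixes g h :: "real \<Rightarrow> real"
  assumes gi: "set_integrable lebesgue {0<..<x} g" and hc: "continuous_on {0..x} h"
  shows "set_integrable lebesgue {0<..<x} (\<lambda>y. g y * h y)"
proof -
  obtain C where C: "\<And>y. y \<in> {0..x} \<Longrightarrow> \<bar>h y\<bar> \<le> C"
    using compact_imp_bounded[OF compact_continuous_image[OF hc compact_Icc]]
    unfolding bounded_iff by force
  define h' where "h' y = indicator {0..x} y *\<^sub>R h y" for y
  have hm: "h' \<in> borel_measurable lebesgue"
  proof -
    have "(\<lambda>y. indicator {0..x} y *\<^sub>R h y) \<in> borel_measurable borel"
      by (rule borel_measurable_continuous_on_indicator[OF _ hc]) simp
    then show ?thesis unfolding h'_def by (intro measurable_completion) simp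
  qed
  have hb: "\<bar>h' y\<bar> \<le> max C 0" for y
  proof (cases "y \<in> {0..x}")
    case True then show ?thesis using C[OF True] by (simp add: h'_def)
  next
    case False then show ?thesis by (simp add: h'_def)
  qed
  have "integrable lebesgue (\<lambda>y. (indicator {0<..<x} y *\<^sub>R g y) * h' y)"
    using gi unfolding set_integrable_def by (rule integrable_bdd_mult[OF _ hm hb])
  moreover have "(\<lambda>y. (indicator {0<..<x} y *\<^sub>R g y) * h' y) = (\<lambda>y. indicator {0<..<x} y *\<^sub>R (g y * h y))"
    by (auto simp: h'_def indicator_def fun_eq_iff)
  ultimately show ?thesis unfolding set_integrable_def by simp
qed

lemma energy_zero:
  fixes T :: "real set" and W g :: "'i::finite \<Rightarrow> real \<Rightarrow> real" and \<omega> :: "'i \<Rightarrow> real"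
  assumes T: "(\<exists>T0>0. T = {0..T0}) \<or> T = {0..}"
   and eps: "0 < \<epsilon>" and om: "\<And>i. 0 < \<omega> i"
   and Wc: "\<And>i. continuous_on T (W i)"
   and gi: "\<And>i t. t \<in> T \<Longrightarrow> set_integrable lebesgue {0<..<t} (g i)"
   and WI: "\<And>i t. t \<in> T \<Longrightarrow> W i t = (LINT x:{0<..<t}|lebesgue. g i x)"
   and ae: "AE x in lebesgue. x \<in> T \<longrightarrow> \<epsilon> * (\<Sum>i\<in>UNIV. \<omega> i * g i x * W i x) \<le> (\<Sum>i\<in>UNIV. \<omega> i * (W i x)\<^sup>2)"
   and t1: "t1 \<in> T"
  shows "W i t1 = 0"
proof -
  have sub: "{0..t1} \<subseteq> T" using T_props(2)[OF T t1] .
  define E where "E x = (\<Sum>i\<in>UNIV. \<omega> i * (W i x)\<^sup>2)" for x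
  have Wc1: "continuous_on {0..t1} (W i)" for i using continuous_on_subset[OF Wc sub] .
  have Ec: "continuous_on {0..t1} E" unfolding E_def[abs_def] by (intro continuous_intros Wc1)
  have En: "0 \<le> E x" for x unfolding E_def using om by (intro sum_nonneg mult_nonneg_nonneg) (auto intro: less_imp_le)
  have bd: "E x \<le> (2 / \<epsilon>) * integral {0..x} E" if x: "x \<in> {0..t1}" for x
  proof -
    have xT: "x \<in> T" using x sub by auto
    have subx: "{0..x} \<subseteq> T" using T_props(2)[OF T xT] .
    have Wcx: "continuous_on {0..x} (W i)" for i using continuous_on_subset[OF Wc subx] .
    have Ecx: "continuous_on {0..x} E" using continuous_on_subset[OF Ec] x by auto
    have prod_i: "set_integrable lebesgue {0<..<x} (\<lambda>y. g i y * W i y)" for i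
      by (rule set_integrable_bdd_mult[OF gi[OF xT] Wcx])
    have sq: "(W i x)\<^sup>2 = 2 * (LINT y:{0<..<x}|lebesgue. g i y * W i y)" for i
    proof -
      have "(W i x)\<^sup>2 = 2 * (LINT y:{0<..<x}|lebesgue. g i y * (LINT z:{0<..<y}|lebesgue. g i z))"
        unfolding WI[OF xT] by (rule sq_set_integral[OF gi[OF xT]])
      also have "(LINT y:{0<..<x}|lebesgue. g i y * (LINT z:{0<..<y}|lebesgue. g i z)) = (LINT y:{0<..<x}|lebesgue. g i y * W i y)"
      proof (rule set_lebesgue_integral_cong)
        show "{0<..<x} \<in> sets lebesgue" by simp
        show "\<forall>y. y \<in> {0<..<x} \<longrightarrow> g i y * (LINT z:{0<..<y}|lebesgue. g i z) = g i y * W i y"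
        proof (intro allI impI)
          fix y assume "y \<in> {0<..<x}"
          then have "y \<in> T" using subx by auto
          then show "g i y * (LINT z:{0<..<y}|lebesgue. g i z) = g i y * W i y" using WI by simp
        qed
      qed
      finally show ?thesis .
    qed
    have "E x = (\<Sum>i\<in>UNIV. 2 * (LINT y:{0<..<x}|lebesgue. \<omega> i * (g i y * W i y)))"
      unfolding E_def sq using prod_i by (simp add: set_integral_mult_right mult_ac)
    also have "\<dots> = 2 * (LINT y:{0<..<x}|lebesgue. (\<Sum>i\<in>UNIV. \<omega> i * (g i y * W i y)))"
      by (subst set_integral_sum_fin(2)) (use prod_i in \<open>auto simp: sum_distrib_left intro: set_integrable_mult_right\<close>)
    also have "(LINT y:{0<..<x}|lebesgue. (\<Sum>i\<in>UNIV. \<omega> i * (g i y * W i y))) \<le> (LINT y:{0<..<x}|lebesgue. E y / \<epsilon>)"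
    proof (rule set_integral_mono_AE)
      show "set_integrable lebesgue {0<..<x} (\<lambda>y. \<Sum>i\<in>UNIV. \<omega> i * (g i y * W i y))"
        by (rule set_integral_sum_fin(1)) (use prod_i in \<open>auto intro: set_integrable_mult_right\<close>)
      have "set_integrable lebesgue {0..x} (\<lambda>y. E y / \<epsilon>)"
        by (rule absolutely_integrable_continuous_real) (use eps in \<open>intro continuous_intros Ecx, auto\<close>)
      then show "set_integrable lebesgue {0<..<x} (\<lambda>y. E y / \<epsilon>)"
        by (rule set_integrable_subset) auto
      show "AE y\<in>{0<..<x} in lebesgue. (\<Sum>i\<in>UNIV. \<omega> i * (g i y * W i y)) \<le> E y / \<epsilon>"
        using ae
      proof eventually_elim
        case (elim y)
        show ?case
        proof
          assume "y \<in> {0<..<x}"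
          then have "y \<in> T" using subx by auto
          then have "\<epsilon> * (\<Sum>i\<in>UNIV. \<omega> i * g i y * W i y) \<le> E y" using elim by (simp add: E_def)
          then show "(\<Sum>i\<in>UNIV. \<omega> i * (g i y * W i y)) \<le> E y / \<epsilon>"
            using eps by (simp add: field_simps mult.assoc)
        qed
      qed
    qed
    also have "(LINT y:{0<..<x}|lebesgue. E y / \<epsilon>) = integral {0..x} E / \<epsilon>"
      by (subst LINT_Ioo_eq_integral) (use eps in \<open>auto intro!: continuous_intros Ecx\<close>)
    finally show ?thesis by simp
  qed
  have E0: "E t1 = 0"
    by (rule gronwall0[OF Ec _ _ bd, of t1]) (use En eps T_props(3)[OF T t1] in auto)
  have nn: "0 \<le> \<omega> j * (W j t1)\<^sup>2" for j using om[of j] by simp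
  from E0 have "\<omega> i * (W i t1)\<^sup>2 = 0"
    unfolding E_def using nn by (subst (asm) sum_nonneg_eq_0_iff) auto
  then show ?thesis using om[of i] by simp
qed

theorem theorem9:
  fixes w :: "'v::finite \<Rightarrow> 'v \<Rightarrow> real"
    and r \<epsilon> :: real and T :: "real set"
    and u \<beta> v \<gamma> :: "real \<Rightarrow> 'v \<Rightarrow> real"
  assumes "weighted_graph w"
    and "0 \<le> r" and "r \<le> 1" and "0 < \<epsilon>"
    and "(\<exists>T0>0. T = {0..T0}) \<or> T = {0..}"
    and "mc_double_obstacle_AC_solution w r \<epsilon> T u \<beta>"
    and "mc_double_obstacle_AC_solution w r \<epsilon> T v \<gamma>"
    and "u 0 = v 0"
  shows "(\<forall>t\<in>T. u t = v t) \<and>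
    (\<exists>T'. T' \<subseteq> T \<and> T - T' \<in> null_sets lebesgue \<and>
       (\<forall>t\<in>T'. (\<forall>i. \<beta> t i - \<gamma> t i = mean w r (\<beta> t) - mean w r (\<gamma> t)) \<and>
          ((\<exists>i. 0 < u t i \<and> u t i < 1) \<longrightarrow> \<beta> t = \<gamma> t)))"
proof -
  note wg = assms(1) and eps = assms(4) and T = assms(5) and u0 = assms(8)
  obtain du where uI: "\<forall>t\<in>T. \<forall>i. u t i \<in> {0..1}" and uc: "\<forall>i. continuous_on T (\<lambda>t. u t i)"
    and Hu: "H1_loc_deriv T u du"
    and AEu: "AE t in lebesgue. t \<in> T \<longrightarrow>
           (\<forall>i. \<epsilon> * du t i + \<epsilon> * graph_laplacian w r (u t) i - u t i + mean w r (u t)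
                 = \<beta> t i - mean w r (\<beta> t)) \<and> \<beta> t \<in> obstacle_set (u t)"
    using assms(6) unfolding mc_double_obstacle_AC_solution_def by blast
  obtain dv where vI: "\<forall>t\<in>T. \<forall>i. v t i \<in> {0..1}" and vc: "\<forall>i. continuous_on T (\<lambda>t. v t i)"
    and Hv: "H1_loc_deriv T v dv"
    and AEv: "AE t in lebesgue. t \<in> T \<longrightarrow>
           (\<forall>i. \<epsilon> * dv t i + \<epsilon> * graph_laplacian w r (v t) i - v t i + mean w r (v t)
                 = \<gamma> t i - mean w r (\<gamma> t)) \<and> \<gamma> t \<in> obstacle_set (v t)"
    using assms(7) unfolding mc_double_obstacle_AC_solution_def by blast
  have T0: "0 \<in> T" using T_props(1)[OF T] .
  have ftcu: "u t i - u s i = (LINT x:{s<..<t}|lebesgue. du x i)" if "s \<in> T" "t \<in> T" "s \<le> t" for i s t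
    by (rule FTC_T[OF T _ _ that]) (use Hu uc in \<open>auto simp: H1_loc_deriv_def\<close>)
  have ftcv: "v t i - v s i = (LINT x:{s<..<t}|lebesgue. dv x i)" if "s \<in> T" "t \<in> T" "s \<le> t" for i s t
    by (rule FTC_T[OF T _ _ that]) (use Hv vc in \<open>auto simp: H1_loc_deriv_def\<close>)
  have iu: "set_integrable lebesgue {s<..<t} (\<lambda>x. du x i)" if "s \<in> T" "t \<in> T" for i s t
    using Hu that by (auto simp: H1_loc_deriv_def H1_weak_deriv_def intro: L2_integrable)
  have iv: "set_integrable lebesgue {s<..<t} (\<lambda>x. dv x i)" if "s \<in> T" "t \<in> T" for i s t
    using Hv that by (auto simp: H1_loc_deriv_def H1_weak_deriv_def intro: L2_integrable)
  define W where "W i t = u t i - v t i" for i t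
  define g where "g i t = du t i - dv t i" for i t
  have gi: "set_integrable lebesgue {s<..<t} (g i)" if "s \<in> T" "t \<in> T" for i s t
    unfolding g_def[abs_def] by (rule set_integral_diff(1)[OF iu[OF that] iv[OF that]])
  have gint: "(LINT x:{s<..<t}|lebesgue. g i x) = W i t - W i s" if "s \<in> T" "t \<in> T" "s \<le> t" for i s t
  proof -
    have "(LINT x:{s<..<t}|lebesgue. g i x) = (LINT x:{s<..<t}|lebesgue. du x i) - (LINT x:{s<..<t}|lebesgue. dv x i)"
      unfolding g_def by (rule set_integral_diff(2)[OF iu[OF that(1,2)] iv[OF that(1,2)]])
    moreover have "(LINT x:{s<..<t}|lebesgue. du x i) = u t i - u s i" using ftcu[OF that, of i] by simp
    moreover have "(LINT x:{s<..<t}|lebesgue. dv x i) = v t i - v s i" using ftcv[OF that, of i] by simp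
    ultimately show ?thesis by (simp add: W_def)
  qed
  have WI: "W i t = (LINT x:{0<..<t}|lebesgue. g i x)" if "t \<in> T" for i t
    using gint[OF T0 that T_props(3)[OF T that]] u0 by (simp add: W_def)
  have Wc: "continuous_on T (W i)" for i
    unfolding W_def[abs_def] using uc vc by (intro continuous_intros) auto
  have AEuv: "AE t in lebesgue. t \<in> T \<longrightarrow>
           (\<forall>i. \<epsilon> * du t i + \<epsilon> * graph_laplacian w r (u t) i - u t i + mean w r (u t)
                 = \<beta> t i - mean w r (\<beta> t)) \<and> \<beta> t \<in> obstacle_set (u t) \<and>
           (\<forall>i. \<epsilon> * dv t i + \<epsilon> * graph_laplacian w r (v t) i - v t i + mean w r (v t)
                 = \<gamma> t i - mean w r (\<gamma> t)) \<and> \<gamma> t \<in> obstacle_set (v t)"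
    using AEu AEv by eventually_elim auto
  have WZ: "W i t = 0" if "t \<in> T" for i t
  proof (cases "\<forall>i. 0 < deg w i")
    case True
    have massg: "AE x in lebesgue. x \<in> T \<longrightarrow> mass w r (\<lambda>i. g i x) = 0"
      using AEuv by eventually_elim (use caseA(1)[OF wg True eps] in \<open>auto simp: g_def\<close>)
    have massW: "mass w r (\<lambda>i. W i t) = 0" if "t \<in> T" for t
    proof -
      have "mass w r (\<lambda>i. W i t) = (\<Sum>i\<in>UNIV. deg w i powr r * (LINT x:{0<..<t}|lebesgue. g i x))"
        by (simp add: mass_alt WI[OF that])
      also have "\<dots> = (\<Sum>i\<in>UNIV. (LINT x:{0<..<t}|lebesgue. deg w i powr r * g i x))"
        by (simp add: set_integral_mult_right)
      also have "\<dots> = (LINT x:{0<..<t}|lebesgue. (\<Sum>i\<in>UNIV. deg w i powr r * g i x))"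
        by (rule set_integral_sum_fin(2)[symmetric]) (use gi[OF T0 that] in \<open>auto intro: set_integrable_mult_right\<close>)
      also have "\<dots> = (LINT x:{0<..<t}|lebesgue. mass w r (\<lambda>i. g i x))"
        by (simp add: mass_alt)
      also have "\<dots> = 0"
        unfolding set_lebesgue_integral_def
      proof (rule integral_eq_zero_AE)
        show "AE x in lebesgue. indicat_real {0<..<t} x *\<^sub>R mass w r (\<lambda>i. g i x) = 0"
          using massg
        proof eventually_elim
          case (elim x)
          show ?case
          proof (cases "x \<in> {0<..<t}")
            case True
            then have "x \<in> T" using T_props(2)[OF T that] by auto
            then show ?thesis using elim by simp
          qed simp
        qed
      qed
      finally show ?thesis .
    qed
    show ?thesis
    proof (rule energy_zero[OF T eps _ Wc _ WI _ that, where \<omega> = "\<lambda>i. deg w i powr r"])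
      show "0 < deg w i powr r" for i using True[rule_format, of i] by simp
      show "set_integrable lebesgue {0<..<t} (g i)" if "t \<in> T" for i t using gi[OF T0 that] .
      show "AE x in lebesgue. x \<in> T \<longrightarrow> \<epsilon> * (\<Sum>i\<in>UNIV. deg w i powr r * g i x * W i x) \<le> (\<Sum>i\<in>UNIV. deg w i powr r * (W i x)\<^sup>2)"
        using AEuv
      proof eventually_elim
        case (elim x)
        show ?case
        proof
          assume xT: "x \<in> T"
          have mW: "mass w r (\<lambda>i. u x i - v x i) = 0" using massW[OF xT] by (simp add: W_def)
          show "\<epsilon> * (\<Sum>i\<in>UNIV. deg w i powr r * g i x * W i x) \<le> (\<Sum>i\<in>UNIV. deg w i powr r * (W i x)\<^sup>2)"
            using caseA(2)[OF wg True eps, where r=r and dU="du x" and U="u x" and B="\<beta> x" and dV="dv x" and V="v x" and G="\<gamma> x", OF _ _ _ _ mW] elim xT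
            by (simp add: g_def W_def)
        qed
      qed
    qed
  next
    case False
    then have D0: "\<forall>i. deg w i = 0" using deg_cases[OF wg] by blast
    show ?thesis
    proof (rule energy_zero[OF T eps _ Wc _ WI _ that, where \<omega> = "\<lambda>i. 1"])
      show "set_integrable lebesgue {0<..<t} (g i)" if "t \<in> T" for i t using gi[OF T0 that] .
      show "AE x in lebesgue. x \<in> T \<longrightarrow> \<epsilon> * (\<Sum>i\<in>UNIV. 1 * g i x * W i x) \<le> (\<Sum>i\<in>UNIV. 1 * (W i x)\<^sup>2)"
        using AEuv
      proof eventually_elim
        case (elim x)
        show ?case
          using caseB[OF wg D0 eps, where r=r and dU="du x" and U="u x" and B="\<beta> x" and dV="dv x" and V="v x" and G="\<gamma> x"] elim
          by (auto simp: g_def W_def)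
      qed
    qed simp
  qed
  have uv: "\<forall>t\<in>T. u t = v t"
  proof
    fix t assume "t \<in> T"
    then show "u t = v t" using WZ[of t] by (auto simp: W_def fun_eq_iff)
  qed
  have aeS: "AE x in lebesgue. x \<in> {0<..<S} \<longrightarrow> g i x = 0" if S: "S \<in> T" for i S
  proof (rule ae_zero_intervals[OF gi[OF T0 S]])
    fix x assume x: "0 \<le> x" "x \<le> S"
    have xT: "x \<in> T" using T_props(2)[OF T S] x by auto
    show "(LINT t:{x<..<S}|lebesgue. g i t) = 0"
      using gint[OF xT S x(2)] WZ[OF xT] WZ[OF S] by simp
  qed
  have aeT: "AE x in lebesgue. x \<in> T \<longrightarrow> g i x = 0" for i
  proof -
    have n0: "AE x in lebesgue. x \<noteq> 0" by (rule AE_discrete_difference[where X="{0}", simplified]) auto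
    from T show ?thesis
    proof
      assume "\<exists>T0>0. T = {0..T0}"
      then obtain T0 where T0p: "0 < T0" and TT: "T = {0..T0}" by blast
      have nT: "AE x in lebesgue. x \<noteq> T0" by (rule AE_discrete_difference[where X="{T0}", simplified]) auto
      have "T0 \<in> T" using TT T0p by simp
      have a: "AE x in lebesgue. x \<in> {0<..<T0} \<longrightarrow> g i x = 0" using aeS[OF \<open>T0 \<in> T\<close>] .
      from a n0 nT show ?thesis
        by eventually_elim (auto simp: TT)
    next
      assume TT: "T = {0..}"
      have "AE x in lebesgue. \<forall>n::nat. x \<in> {0<..<real n} \<longrightarrow> g i x = 0"
        unfolding AE_all_countable using aeS TT by auto
      with n0 show ?thesis
      proof eventually_elim
        case (elim x)
        show ?case
        proof
          assume "x \<in> T"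
          then have "0 < x" using elim TT by auto
          obtain n :: nat where "x < real n" using reals_Archimedean2 by blast
          then show "g i x = 0" using elim \<open>0 < x\<close> by auto
        qed
      qed
    qed
  qed
  have aeAll: "AE x in lebesgue. x \<in> T \<longrightarrow> (\<forall>i. du x i = dv x i)"
  proof -
    have "AE x in lebesgue. \<forall>i. x \<in> T \<longrightarrow> g i x = 0"
      by (rule eventually_all_finite) (rule aeT)
    then show ?thesis by eventually_elim (auto simp: g_def)
  qed
  have AEP: "AE t in lebesgue. t \<in> T \<longrightarrow>
           (\<forall>i. \<epsilon> * du t i + \<epsilon> * graph_laplacian w r (u t) i - u t i + mean w r (u t)
                 = \<beta> t i - mean w r (\<beta> t)) \<and> \<beta> t \<in> obstacle_set (u t) \<and>
           (\<forall>i. \<epsilon> * dv t i + \<epsilon> * graph_laplacian w r (v t) i - v t i + mean w r (v t)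
                 = \<gamma> t i - mean w r (\<gamma> t)) \<and> \<gamma> t \<in> obstacle_set (v t) \<and> (\<forall>i. du t i = dv t i)"
    using AEuv aeAll by eventually_elim auto
  then obtain N where N: "N \<in> null_sets lebesgue" and PN: "\<And>t. t \<in> space lebesgue - N \<Longrightarrow> t \<in> T \<longrightarrow>
           (\<forall>i. \<epsilon> * du t i + \<epsilon> * graph_laplacian w r (u t) i - u t i + mean w r (u t)
                 = \<beta> t i - mean w r (\<beta> t)) \<and> \<beta> t \<in> obstacle_set (u t) \<and>
           (\<forall>i. \<epsilon> * dv t i + \<epsilon> * graph_laplacian w r (v t) i - v t i + mean w r (v t)
                 = \<gamma> t i - mean w r (\<gamma> t)) \<and> \<gamma> t \<in> obstacle_set (v t) \<and> (\<forall>i. du t i = dv t i)"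
    by (rule AE_E3) blast
  have Tsets: "T \<in> sets lebesgue"
    using T_props(4)[OF T] by (intro sets_completionI_sets) (simp add: borel_closed)
  define T' where "T' = T - N"
  have "T - T' = T \<inter> N" by (auto simp: T'_def)
  then have nullT: "T - T' \<in> null_sets lebesgue" using null_set_Int1[OF N Tsets] by simp
  have main: "(\<forall>i. \<beta> t i - \<gamma> t i = mean w r (\<beta> t) - mean w r (\<gamma> t)) \<and>
          ((\<exists>i. 0 < u t i \<and> u t i < 1) \<longrightarrow> \<beta> t = \<gamma> t)" if t: "t \<in> T'" for t
  proof -
    have tT: "t \<in> T" using t by (simp add: T'_def)
    have P: "(\<forall>i. \<epsilon> * du t i + \<epsilon> * graph_laplacian w r (u t) i - u t i + mean w r (u t)
                 = \<beta> t i - mean w r (\<beta> t)) \<and> \<beta> t \<in> obstacle_set (u t) \<and>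
           (\<forall>i. \<epsilon> * dv t i + \<epsilon> * graph_laplacian w r (v t) i - v t i + mean w r (v t)
                 = \<gamma> t i - mean w r (\<gamma> t)) \<and> \<gamma> t \<in> obstacle_set (v t) \<and> (\<forall>i. du t i = dv t i)"
    proof -
      have tsp: "t \<in> space lebesgue - N" using t by (simp add: T'_def)
      show ?thesis using PN[OF tsp] tT by (rule mp)
    qed
    have vt: "v t = u t" using uv tT by simp
    have diff: "\<beta> t i - \<gamma> t i = mean w r (\<beta> t) - mean w r (\<gamma> t)" for i
    proof -
      have "\<beta> t i - mean w r (\<beta> t) = \<gamma> t i - mean w r (\<gamma> t)"
        using P vt by (metis)
      then show ?thesis by simp
    qed
    moreover have "\<beta> t = \<gamma> t" if ex: "\<exists>i. 0 < u t i \<and> u t i < 1"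
    proof -
      obtain i where i: "0 < u t i" "u t i < 1" using ex by blast
      have ut01: "\<forall>j. u t j \<in> {0..1}" using uI tT by blast
      have "\<beta> t i = 0" using P ut01 i by (simp add: obstacle_set_def)
      moreover have "\<gamma> t i = 0" using P ut01 i vt by (simp add: obstacle_set_def)
      ultimately have "mean w r (\<beta> t) - mean w r (\<gamma> t) = 0" using diff[of i] by simp
      then show ?thesis using diff by (auto simp: fun_eq_iff)
    qed
    ultimately show ?thesis by blast
  qed
  show ?thesis
    using uv nullT main by (intro conjI exI[of _ T']) (auto simp: T'_def)
qed

end
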